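(* Let $\beta\in(0,d]$, $c_\beta=1+2^\beta$, and let $Q_0\subset\mathbb{R}^d$ be a cube. There exist constants $c,C>0$ such that $$\mathcal{H}^{\beta,Q}_\infty\left(\{x\in Q:|u(x)-c_Q|>t\}\right) \leq \frac{C}{\|u\|_{BMO^\beta_*(Q_0)}} \int_{Q} |u-c_Q|\, d\mathcal{H}^{\beta,Q}_\infty \exp\left(\frac{-ct}{\|u\|_{BMO^\beta_*(Q_0)}}\right)$$ for all $u \in BMO^\beta(Q_0)$ with $\|u\|_{BMO^\beta_*(Q_0)}>0$, all finite subcubes $Q \subset Q_0$ with sides parallel to those of $Q_0$, and all $t\geq c_\beta \|u\|_{BMO^\beta_*(Q_0)}$, where $c_Q\in\mathbb{R}$ is a point at which $c\mapsto \frac{1}{l(Q)^\beta} \int_{Q} |u-c| \,d\mathcal{H}^{\beta,Q}_\infty$ attains its minimum.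
   Context: $\mathcal{H}^{\beta}_{\infty}(E)= \inf \{\sum_{i} \omega_\beta r_i^\beta : E \subset \bigcup_{i} B(x_i,r_i) \}$, $\omega_\beta= \pi^{\beta/2}/\Gamma(\beta/2+1)$. For a cube $Q=a+[0,\ell)^d$ (cubes are half-open), $\mathcal{D}(Q)=\{a+2^{-j}\ell(m+[0,1)^d): j\in\mathbb{Z}, m\in\mathbb{Z}^d\}$ and $\mathcal{H}^{\beta,Q}_{\infty}(E)= \inf \{\sum_{i} l(Q_i)^\beta : E \subset \bigcup_{i} Q_i,\ Q_i \in \mathcal{D}(Q) \}$, $l(\cdot)$ the side length. For an outer measure $H$, $f\ge0$ and a set $A$, $\int_A f\,dH=\int_0^\infty H(\{x\in A:f(x)>t\})\,dt$. $f$ is $\mathcal{H}^\beta_\infty$-quasicontinuous if for every $\epsilon>0$ there is an open $O$ with $\mathcal{H}^\beta_\infty(O)<\epsilon$ and $f|_{O^c}$ continuous; $L^1(Q_0;\mathcal{H}^\beta_\infty)$ is the set of such $f$ with $\int_{Q_0}|f|\,d\mathcal{H}^\beta_\infty<\infty$. $BMO^\beta(Q_0)$ is the set of $u\in L^1(Q_0;\mathcal{H}^\beta_\infty)$ with $\sup_{Q}\inf_{c\in\mathbb{R}} l(Q)^{-\beta}\int_Q|u-c|\,d\mathcal{H}^\beta_\infty<\infty$, and $\|u\|_{BMO^{\beta}_*(Q_0)}= \sup_{Q} \inf_{c \in \mathbb{R}} l(Q)^{-\beta} \int_{Q} |u-c| \,d\mathcal{H}^{\beta,Q}_\infty$, both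 suprema over finite subcubes $Q\subset Q_0$ with sides parallel to those of $Q_0$. *)

theory Defs
  imports "HOL-Analysis.Analysis"
begin

definition cube :: "real^'d \<Rightarrow> real \<Rightarrow> (real^'d) set" where
  "cube a l = {x. \<forall>i. a$i \<le> x$i \<and> x$i < a$i + l}"

definition omega :: "real \<Rightarrow> real" where
  "omega \<beta> = pi powr (\<beta>/2) / Gamma (\<beta>/2 + 1)"

definition hcont :: "real \<Rightarrow> (real^'d) set \<Rightarrow> ennreal" where
  "hcont \<beta> E = Inf {(\<Sum>i. ennreal (omega \<beta> * r i powr \<beta>)) | (x :: nat \<Rightarrow> real^'d) (r :: nat \<Rightarrow> real).
      (\<forall>i. 0 \<le> r i) \<and> E \<subseteq> (\<Union>i. ball (x i) (r i))}"

text \<open>Dyadic cubes D(Q) of Q = cube a l, as (corner, side length) pairs: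
  corner a + 2^(-j) l m, side 2^(-j) l, with j integer and m in Z^d.\<close>
definition dyadic_params :: "real^'d \<Rightarrow> real \<Rightarrow> ((real^'d) \<times> real) set" where
  "dyadic_params a l = {(a + (2 powr (- real_of_int j) * l) *\<^sub>R m, 2 powr (- real_of_int j) * l)
      | j m. \<forall>i. m$i \<in> \<int>}"

text \<open>Dyadic Hausdorff content H^{beta,Q}_infinity for Q = cube a l.\<close>
definition hdy :: "real \<Rightarrow> real^'d \<Rightarrow> real \<Rightarrow> (real^'d) set \<Rightarrow> ennreal" where
  "hdy \<beta> a l E = Inf {(\<Sum>i. ennreal (s i powr \<beta>)) | (p :: nat \<Rightarrow> real^'d) (s :: nat \<Rightarrow> real).
      (\<forall>i. (p i, s i) \<in> dyadic_params a l) \<and> E \<subseteq> (\<Union>i. cube (p i) (s i))}"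

definition choq :: "('a set \<Rightarrow> ennreal) \<Rightarrow> 'a set \<Rightarrow> ('a \<Rightarrow> real) \<Rightarrow> ennreal" where
  "choq H A f = set_nn_integral lborel {0::real..} (\<lambda>t. H {x \<in> A. f x > t})"

definition quasicont :: "real \<Rightarrow> (real^'d) set \<Rightarrow> (real^'d \<Rightarrow> real) \<Rightarrow> bool" where
  "quasicont \<beta> Q0 f \<longleftrightarrow> (\<forall>\<epsilon>>0. \<exists>V. open V \<and> hcont \<beta> V < ennreal \<epsilon> \<and> continuous_on (Q0 - V) f)"

definition L1H :: "real \<Rightarrow> (real^'d) set \<Rightarrow> (real^'d \<Rightarrow> real) set" where
  "L1H \<beta> Q0 = {f. quasicont \<beta> Q0 f \<and> choq (hcont \<beta>) Q0 (\<lambda>x. \<bar>f x\<bar>) < \<infinity>}"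

text \<open>Finite subcubes cube a l of cube a0 l0 (sides automatically parallel).\<close>
definition subcube :: "real^'d \<Rightarrow> real \<Rightarrow> real^'d \<Rightarrow> real \<Rightarrow> bool" where
  "subcube a0 l0 a l \<longleftrightarrow> 0 < l \<and> cube a l \<subseteq> cube a0 l0"

definition BMO :: "real \<Rightarrow> real^'d \<Rightarrow> real \<Rightarrow> (real^'d \<Rightarrow> real) set" where
  "BMO \<beta> a0 l0 = {u. u \<in> L1H \<beta> (cube a0 l0) \<and>
     (SUP al \<in> {(a,l). subcube a0 l0 a l}.
        INF c. ennreal (snd al powr (-\<beta>)) * choq (hcont \<beta>) (cube (fst al) (snd al)) (\<lambda>x. \<bar>u x - c\<bar>)) < \<infinity>}"

definition bmo_star :: "real \<Rightarrow> real^'d \<Rightarrow> real \<Rightarrow> (real^'d \<Rightarrow> real) \<Rightarrow> ennreal" where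
  "bmo_star \<beta> a0 l0 u =
     (SUP al \<in> {(a,l). subcube a0 l0 a l}.
        INF c. ennreal (snd al powr (-\<beta>)) *
          choq (hdy \<beta> (fst al) (snd al)) (cube (fst al) (snd al)) (\<lambda>x. \<bar>u x - c\<bar>))"

end

theory Submission
  imports Defs
begin

locale dyad =
  fixes \<beta> :: real and a :: "real^'d" and l :: real
  assumes bpos: "0 < \<beta>" and bled: "\<beta> \<le> real CARD('d)" and lpos: "0 < l"
begin

definition sd :: "int \<Rightarrow> real" where "sd k = 2 powr (- real_of_int k) * l"
definition Lk :: "int \<Rightarrow> real" where "Lk k = sd k powr \<beta>"
definition idx :: "int \<Rightarrow> real^'d \<Rightarrow> 'd \<Rightarrow> int" where
  "idx k x = (\<lambda>i. \<lfloor>(x$i - a$i) / sd k\<rfloor>)"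
definition crn :: "int \<Rightarrow> ('d \<Rightarrow> int) \<Rightarrow> real^'d" where
  "crn k m = a + sd k *\<^sub>R (\<chi> i. real_of_int (m i))"
definition DC :: "int \<Rightarrow> ('d \<Rightarrow> int) \<Rightarrow> (real^'d) set" where
  "DC k m = cube (crn k m) (sd k)"

lemma sd_pos: "0 < sd k" using lpos by (simp add: sd_def)
lemma Lk_pos: "0 < Lk k" using sd_pos[of k] by (simp add: Lk_def)

lemma sd_add: "sd (k + j) = 2 powr (- real_of_int j) * sd k"
  by (simp add: sd_def powr_add[symmetric] algebra_simps)

lemma sd_less_iff: "sd k' < sd k \<longleftrightarrow> k < k'"
  using lpos by (simp add: sd_def)

lemma sd_le_iff: "sd k' \<le> sd k \<longleftrightarrow> k \<le> k'"
  using lpos by (simp add: sd_def)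

lemma sd_pred: "sd (k - 1) = 2 * sd k"
  using sd_add[of k "-1"] by simp

lemma Lk_pred: "Lk (k - 1) = 2 powr \<beta> * Lk k"
  by (simp add: Lk_def sd_pred powr_mult sd_pos)

lemma Lk_le_iff: "Lk k' \<le> Lk k \<longleftrightarrow> k \<le> k'"
proof -
  have "sd k' powr \<beta> \<le> sd k powr \<beta> \<longleftrightarrow> sd k' \<le> sd k"
    using bpos sd_pos[of k] sd_pos[of k'] by (meson not_le powr_less_mono2 powr_mono2 less_imp_le)
  thus ?thesis using sd_le_iff[of k' k] by (simp add: Lk_def)
qed

lemma sdL_le: "sd k \<le> r \<Longrightarrow> Lk k \<le> r powr \<beta>"
  using bpos sd_pos[of k] by (simp add: Lk_def powr_mono2)

lemma mem_DC: "y \<in> DC k m \<longleftrightarrow> idx k y = m"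
proof -
  have s: "0 < sd k" by (rule sd_pos)
  have "y \<in> DC k m \<longleftrightarrow> (\<forall>i. real_of_int (m i) \<le> (y$i - a$i)/sd k \<and> (y$i - a$i)/sd k < real_of_int (m i) + 1)"
    using s by (auto simp: DC_def cube_def crn_def pos_le_divide_eq pos_divide_less_eq algebra_simps)
  also have "\<dots> \<longleftrightarrow> idx k y = m" by (auto simp: idx_def fun_eq_iff floor_eq_iff)
  finally show ?thesis .
qed

lemma crn_in: "crn k m \<in> DC k m"
  using sd_pos[of k] by (simp add: DC_def cube_def)

lemma idx_crn: "idx k (crn k m) = m"
  using crn_in mem_DC by blast

lemma idx_anc:
  assumes "k \<le> k'"
  shows "idx k y i = idx k' y i div 2^nat(k'-k)"
proof -
  have e: "sd k' = 2 powr (- real_of_int (k'-k)) * sd k" using sd_add[of k "k'-k"] by simp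
  hence e1: "sd k = 2 powr (real_of_int (k'-k)) * sd k'" by (simp add: powr_minus field_simps powr_add[symmetric])
  have p: "2 powr (real_of_int (k'-k)) = real_of_int (2^nat(k'-k))"
    using assms by (simp add: powr_realpow[symmetric])
  have "(y$i - a$i) / sd k = ((y$i - a$i) / sd k') / real_of_int (2^nat(k'-k))"
    unfolding e1 p by simp
  hence "\<lfloor>(y$i - a$i) / sd k\<rfloor> = \<lfloor>((y$i - a$i) / sd k') / real_of_int (2^nat(k'-k))\<rfloor>"
    by (rule arg_cong)
  also have "\<dots> = \<lfloor>(y$i - a$i) / sd k'\<rfloor> div 2^nat(k'-k)"
    by (rule floor_divide_real_eq_div) simp
  finally have "\<lfloor>(y$i - a$i) / sd k\<rfloor> = \<lfloor>(y$i - a$i) / sd k'\<rfloor> div 2^nat(k'-k)" .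
  thus ?thesis by (simp add: idx_def)
qed

lemma idx_eq_mono: "k \<le> k' \<Longrightarrow> idx k' y = idx k' x \<Longrightarrow> idx k y = idx k x"
  using idx_anc[of k k'] by (auto simp: fun_eq_iff)

lemma DC_nest: "k \<le> k' \<Longrightarrow> y \<in> DC k m \<Longrightarrow> y \<in> DC k' m' \<Longrightarrow> DC k' m' \<subseteq> DC k m"
  unfolding mem_DC by (auto simp: mem_DC dest: idx_eq_mono[of k k'])

lemma DC_self: "x \<in> DC k (idx k x)" by (simp add: mem_DC)

lemma params_DC: "(p, r) \<in> dyadic_params a l \<Longrightarrow> \<exists>k m. p = crn k m \<and> r = sd k"
proof -
  assume "(p, r) \<in> dyadic_params a l"
  then obtain j mv where p: "p = a + (2 powr (- real_of_int j) * l) *\<^sub>R mv"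
     and r: "r = 2 powr (- real_of_int j) * l" and mv: "\<forall>i. mv$i \<in> \<int>"
    by (auto simp: dyadic_params_def)
  have "mv = (\<chi> i. real_of_int \<lfloor>mv$i\<rfloor>)"
    using mv by (auto simp: vec_eq_iff elim!: Ints_cases)
  hence "p = crn j (\<lambda>i. \<lfloor>mv$i\<rfloor>) \<and> r = sd j"
    using p r by (simp add: crn_def sd_def)
  thus ?thesis by blast
qed

lemma DC_params: "(crn k m, sd k) \<in> dyadic_params a l"
  unfolding dyadic_params_def crn_def sd_def
  by (rule CollectI, rule exI[of _ k], rule exI[of _ "\<chi> i. real_of_int (m i)"]) auto

lemma Q_DC: "cube a l = DC 0 (\<lambda>_. 0)"
  by (simp add: DC_def crn_def sd_def zero_vec_def[symmetric])

lemma DC_ne: "DC k m \<noteq> {}" using crn_in by blast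

end

context dyad begin

abbreviation H where "H \<equiv> hdy \<beta> a l"

lemma H_le: "(\<forall>i. (p i, r i) \<in> dyadic_params a l) \<Longrightarrow> E \<subseteq> (\<Union>i. cube (p i) (r i))
   \<Longrightarrow> H E \<le> (\<Sum>i. ennreal (r i powr \<beta>))"
  unfolding hdy_def by (rule Inf_lower) blast

lemma H_less_cover: "H E < X \<Longrightarrow> \<exists>p r. (\<forall>i. (p i, r i) \<in> dyadic_params a l) \<and>
    E \<subseteq> (\<Union>i. cube (p i) (r i)) \<and> (\<Sum>i. ennreal (r i powr \<beta>)) < X"
  unfolding hdy_def by (subst (asm) Inf_less_iff) blast

lemma H_ge: "(\<And>p r. (\<forall>i. (p i, r i) \<in> dyadic_params a l) \<Longrightarrow> E \<subseteq> (\<Union>i. cube (p i) (r i))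
    \<Longrightarrow> X \<le> (\<Sum>i. ennreal (r i powr \<beta>))) \<Longrightarrow> X \<le> H E"
  unfolding hdy_def by (rule Inf_greatest) blast

lemma H_mono: "X \<subseteq> Y \<Longrightarrow> H X \<le> H Y"
  by (rule H_ge, rule H_le) auto

lemma Lk_nat: "Lk (int n) = l powr \<beta> * (2 powr (-\<beta>))^n"
proof -
  have "Lk (int n) = (2 powr (- real n)) powr \<beta> * l powr \<beta>"
    using lpos by (simp add: Lk_def sd_def powr_mult)
  also have "(2 powr (- real n)) powr \<beta> = (2 powr (-\<beta>))^n"
    by (simp add: powr_powr powr_realpow[symmetric] mult.commute)
  finally show ?thesis by simp
qed

lemma tiny: "0 < \<delta> \<Longrightarrow> \<exists>k. Lk k < \<delta>"
proof -
  assume d: "0 < \<delta>"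
  have "(\<lambda>n. l powr \<beta> * (2 powr (-\<beta>))^n) \<longlonglongrightarrow> l powr \<beta> * 0"
    using bpos by (intro tendsto_intros) (simp add: powr_minus divide_simps)
  hence "\<forall>\<^sub>F n in sequentially. l powr \<beta> * (2 powr (-\<beta>))^n < \<delta>"
    using d by (simp add: order_tendstoD(2))
  then obtain n where "l powr \<beta> * (2 powr (-\<beta>))^n < \<delta>"
    by (auto simp: eventually_sequentially)
  thus ?thesis using Lk_nat by metis
qed

lemma half_sum: "(\<Sum>i. ennreal (e * (1/2)^Suc i)) = ennreal e" if "0 \<le> e"
proof -
  have "(\<lambda>i. e * (1/2::real)^Suc i) sums (e * 1)"
    by (rule sums_mult[OF power_half_series])
  thus ?thesis using that
    by (subst suminf_ennreal2) (auto simp: sums_iff)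
qed

lemma H_le_sub:
  assumes P: "\<forall>i\<in>I. (p i, r i) \<in> dyadic_params a l" and E: "E \<subseteq> (\<Union>i\<in>I. cube (p i) (r i))"
  shows "H E \<le> (\<Sum>i. if i \<in> I then ennreal (r i powr \<beta>) else 0)"
proof (rule ennreal_le_epsilon)
  fix e :: real assume e: "0 < e"
  have "\<forall>i. \<exists>k. Lk k < e * (1/2)^Suc i" using e by (intro allI tiny) simp
  then have "\<exists>k. \<forall>i. Lk (k i) < e * (1/2)^Suc i" by (rule choice)
  then obtain k where k: "\<And>i. Lk (k i) < e * (1/2)^Suc i" by blast
  define p' where "p' i = (if i \<in> I then p i else crn (k i) (\<lambda>_. 0))" for i
  define r' where "r' i = (if i \<in> I then r i else sd (k i))" for i
  have "H E \<le> (\<Sum>i. ennreal (r' i powr \<beta>))"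
  proof (rule H_le)
    show "\<forall>i. (p' i, r' i) \<in> dyadic_params a l"
      using P DC_params by (auto simp: p'_def r'_def)
    show "E \<subseteq> (\<Union>i. cube (p' i) (r' i))"
      using E by (force simp: p'_def r'_def)
  qed
  also have "(\<Sum>i. ennreal (r' i powr \<beta>)) = (\<Sum>i. (if i \<in> I then ennreal (r i powr \<beta>) else 0)
       + (if i \<in> I then 0 else ennreal (Lk (k i))))"
    by (intro suminf_cong) (simp add: r'_def Lk_def)
  also have "\<dots> = (\<Sum>i. if i \<in> I then ennreal (r i powr \<beta>) else 0) + (\<Sum>i. if i \<in> I then 0 else ennreal (Lk (k i)))"
    by (rule suminf_add[symmetric]) auto
  also have "(\<Sum>i. if i \<in> I then 0 else ennreal (Lk (k i))) \<le> (\<Sum>i. ennreal (e * (1/2)^Suc i))"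
    by (intro suminf_le) (auto intro!: ennreal_leI less_imp_le[OF k] simp del: power_Suc)
  also have "\<dots> = ennreal e" using e by (intro half_sum) simp
  finally show "H E \<le> (\<Sum>i. if i \<in> I then ennreal (r i powr \<beta>) else 0) + ennreal e"
    by (simp add: add_left_mono)
qed

lemma H_empty: "H {} = 0"
  using H_le_sub[of "{}" _ _ "{}"] by simp

lemma H_sub: "H (\<Union>n. E n) \<le> (\<Sum>n. H (E n))"
proof (rule ennreal_le_epsilon)
  fix e :: real assume fin: "(\<Sum>n. H (E n)) < top" and e: "0 < e"
  have "\<forall>n. \<exists>p r. (\<forall>i. (p i, r i) \<in> dyadic_params a l) \<and> E n \<subseteq> (\<Union>i. cube (p i) (r i)) \<and>
          (\<Sum>i. ennreal (r i powr \<beta>)) < H (E n) + ennreal (e * (1/2)^Suc n)"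
  proof
    fix n
    have "H (E n) \<le> (\<Sum>n. H (E n))"
      using sum_le_suminf[of "\<lambda>n. H (E n)" "{n}"] by simp
    hence "H (E n) < top" using fin by simp
    then obtain x where x: "H (E n) = ennreal x" "0 \<le> x" by (cases "H (E n)") auto
    have "x < x + e * (1/2)^Suc n" using e by simp
    have pos: "0 < x + e * (1/2)^Suc n" using e x by (intro add_nonneg_pos) auto
    have "ennreal x < ennreal (x + e * (1/2)^Suc n)" by (rule ennreal_lessI[OF pos]) (use e in simp)
    hence "H (E n) < H (E n) + ennreal (e * (1/2)^Suc n)"
      using e x by (simp add: ennreal_plus[symmetric] del: ennreal_plus power_Suc)
    thus "\<exists>p r. (\<forall>i. (p i, r i) \<in> dyadic_params a l) \<and> E n \<subseteq> (\<Union>i. cube (p i) (r i)) \<and>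
          (\<Sum>i. ennreal (r i powr \<beta>)) < H (E n) + ennreal (e * (1/2)^Suc n)"
      by (rule H_less_cover)
  qed
  then have "\<exists>pp. \<forall>n. \<exists>r. (\<forall>i. (pp n i, r i) \<in> dyadic_params a l) \<and> E n \<subseteq> (\<Union>i. cube (pp n i) (r i)) \<and>
          (\<Sum>i. ennreal (r i powr \<beta>)) < H (E n) + ennreal (e * (1/2)^Suc n)" by (rule choice)
  then obtain pp where "\<forall>n. \<exists>r. (\<forall>i. (pp n i, r i) \<in> dyadic_params a l) \<and> E n \<subseteq> (\<Union>i. cube (pp n i) (r i)) \<and>
          (\<Sum>i. ennreal (r i powr \<beta>)) < H (E n) + ennreal (e * (1/2)^Suc n)" by blast
  then have "\<exists>rr. \<forall>n. (\<forall>i. (pp n i, rr n i) \<in> dyadic_params a l) \<and> E n \<subseteq> (\<Union>i. cube (pp n i) (rr n i)) \<and>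
          (\<Sum>i. ennreal (rr n i powr \<beta>)) < H (E n) + ennreal (e * (1/2)^Suc n)" by (rule choice)
  then obtain rr where pr: "\<And>n. (\<forall>i. (pp n i, rr n i) \<in> dyadic_params a l) \<and> E n \<subseteq> (\<Union>i. cube (pp n i) (rr n i)) \<and>
          (\<Sum>i. ennreal (rr n i powr \<beta>)) < H (E n) + ennreal (e * (1/2)^Suc n)" by blast
  define p where "p k = pp (fst (prod_decode k)) (snd (prod_decode k))" for k
  define r where "r k = rr (fst (prod_decode k)) (snd (prod_decode k))" for k
  have "H (\<Union>n. E n) \<le> (\<Sum>k. ennreal (r k powr \<beta>))"
  proof (rule H_le)
    show "\<forall>i. (p i, r i) \<in> dyadic_params a l" using pr by (simp add: p_def r_def)
    show "(\<Union>n. E n) \<subseteq> (\<Union>i. cube (p i) (r i))"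
    proof
      fix x assume "x \<in> (\<Union>n. E n)"
      then obtain n where "x \<in> E n" by auto
      then obtain i where "x \<in> cube (pp n i) (rr n i)" using pr[of n] by auto
      hence "x \<in> cube (p (prod_encode (n,i))) (r (prod_encode (n,i)))" by (simp add: p_def r_def)
      thus "x \<in> (\<Union>i. cube (p i) (r i))" by blast
    qed
  qed
  also have "(\<Sum>k. ennreal (r k powr \<beta>)) = (\<Sum>n. (\<Sum>i. ennreal (rr n i powr \<beta>)))"
    unfolding r_def
    by (rule suminf_ennreal_2dimen[where f="\<lambda>p. ennreal (rr (fst p) (snd p) powr \<beta>)"]) simp
  also have "\<dots> \<le> (\<Sum>n. H (E n) + ennreal (e * (1/2)^Suc n))"
    using pr by (intro suminf_le) (simp_all add: less_imp_le del: power_Suc)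
  also have "\<dots> = (\<Sum>n. H (E n)) + (\<Sum>n. ennreal (e * (1/2)^Suc n))"
    by (rule suminf_add[symmetric]) auto
  also have "(\<Sum>n. ennreal (e * (1/2)^Suc n)) = ennreal e" using e by (intro half_sum) simp
  finally show "H (\<Union>n. E n) \<le> (\<Sum>n. H (E n)) + ennreal e" .
qed

lemma H_Un: "H (X \<union> Y) \<le> H X + H Y"
proof -
  define E where "E n = (if n = 0 then X else if n = 1 then Y else {})" for n :: nat
  have "X \<union> Y = (\<Union>n. E n)" by (auto simp: E_def split: if_splits)
  hence "H (X \<union> Y) \<le> (\<Sum>n. H (E n))" using H_sub by simp
  also have "(\<Sum>n. H (E n)) = (\<Sum>n\<in>{0,1}. H (E n))"
    by (rule suminf_finite) (auto simp: E_def H_empty)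
  finally show ?thesis by (simp add: E_def)
qed

lemma H_UN_fin: "finite S \<Longrightarrow> H (\<Union>s\<in>S. X s) \<le> (\<Sum>s\<in>S. H (X s))"
proof (induction S rule: finite_induct)
  case empty thus ?case by (simp add: H_empty)
next
  case (insert s S)
  have "H (\<Union>s\<in>insert s S. X s) = H (X s \<union> (\<Union>s\<in>S. X s))" by simp
  also have "\<dots> \<le> H (X s) + H (\<Union>s\<in>S. X s)" by (rule H_Un)
  also have "\<dots> \<le> H (X s) + (\<Sum>s\<in>S. H (X s))" using insert by (simp add: add_left_mono)
  finally show ?case using insert by simp
qed

lemma H_cube_le: "E \<subseteq> DC k m \<Longrightarrow> H E \<le> ennreal (Lk k)"
proof -
  assume E: "E \<subseteq> DC k m"
  have "H E \<le> (\<Sum>i. if i \<in> {0::nat} then ennreal (sd k powr \<beta>) else 0)"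
    using H_le_sub[of "{0}" "\<lambda>_. crn k m" "\<lambda>_. sd k" E] E DC_params by (auto simp: DC_def)
  also have "\<dots> = ennreal (Lk k)" by (subst suminf_finite[of "{0}"]) (auto simp: Lk_def)
  finally show ?thesis .
qed

end

lemma le_suminf_ennreal: "(f :: nat \<Rightarrow> ennreal) i \<le> suminf f"
  using sum_le_suminf[of f "{i}"] by simp

lemma hdy_mono: "X \<subseteq> Y \<Longrightarrow> hdy b a l X \<le> hdy b a l Y"
  unfolding hdy_def by (rule Inf_superset_mono) blast

lemma choq_mono:
  assumes "\<And>s. 0 \<le> s \<Longrightarrow> H1 {x\<in>A. f x > s} \<le> H2 {x\<in>B. g x > s}"
  shows "choq H1 A f \<le> choq H2 B g"
  unfolding choq_def
  by (intro nn_integral_mono) (auto simp: assms indicator_def intro: mult_right_mono)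

lemma choq_cheb:
  assumes mono: "\<And>X Y. X \<subseteq> Y \<Longrightarrow> H' X \<le> H' Y" and t: "0 < t"
  shows "ennreal t * H' {x\<in>A. f x > t} \<le> choq H' A f"
proof -
  have "(\<integral>\<^sup>+s. H' {x\<in>A. f x > t} * indicator {0..<t} s \<partial>lborel) \<le> choq H' A f"
    unfolding choq_def
  proof (intro nn_integral_mono)
    fix s :: real
    show "H' {x\<in>A. f x > t} * indicator {0..<t} s \<le> H' {x\<in>A. f x > s} * indicator {0..} s"
    proof (cases "s \<in> {0..<t}")
      case True
      hence "{x\<in>A. f x > t} \<subseteq> {x\<in>A. f x > s}" by auto
      thus ?thesis using True mono by (auto simp: indicator_def)
    qed (simp add: indicator_def)
  qed
  also have "(\<integral>\<^sup>+s. H' {x\<in>A. f x > t} * indicator {0..<t} s \<partial>lborel) = H' {x\<in>A. f x > t} * ennreal t"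
    using t by (subst nn_integral_cmult_indicator) auto
  finally show ?thesis by (simp add: mult.commute)
qed

context dyad begin

lemma vol_cbox:
  fixes p :: "real^'d" assumes s: "0 \<le> s"
  shows "emeasure lborel (cbox p (p + (\<chi> i. s))) = ennreal (s ^ CARD('d))"
    and "emeasure lborel (box p (p + (\<chi> i. s))) = ennreal (s ^ CARD('d))"
proof -
  have ib: "\<And>b. b \<in> Basis \<Longrightarrow> (\<chi> i. s) \<bullet> b = (s::real)"
    by (auto simp: Basis_vec_def inner_axis)
  have cB: "card (Basis :: (real^'d) set) = CARD('d)"
    using DIM_cart[where 'a=real and 'b='d] by simp
  have "(\<Prod>b\<in>(Basis::(real^'d) set). (p + (\<chi> i. s) - p) \<bullet> b) = (\<Prod>b\<in>(Basis::(real^'d) set). s)"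
    by (rule prod.cong) (auto simp: ib)
  hence pr: "(\<Prod>b\<in>(Basis::(real^'d) set). (p + (\<chi> i. s) - p) \<bullet> b) = s ^ CARD('d)"
    using cB by simp
  have c: "\<forall>b\<in>(Basis::(real^'d) set). p \<bullet> b \<le> (p + (\<chi> i. s)) \<bullet> b"
  proof
    fix b :: "real^'d" assume "b \<in> Basis"
    thus "p \<bullet> b \<le> (p + (\<chi> i. s)) \<bullet> b" using ib[of b] s by (simp add: inner_add_left)
  qed
  show "emeasure lborel (cbox p (p + (\<chi> i. s))) = ennreal (s ^ CARD('d))"
    using c pr by (simp add: emeasure_lborel_cbox_eq)
  show "emeasure lborel (box p (p + (\<chi> i. s))) = ennreal (s ^ CARD('d))"
    using c pr by (simp add: emeasure_lborel_box_eq)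
qed

lemma H_cube_ge: "ennreal (Lk k) \<le> H (DC k m)"
proof (rule H_ge)
  fix p :: "nat \<Rightarrow> real^'d" and r :: "nat \<Rightarrow> real"
  assume P: "\<forall>i. (p i, r i) \<in> dyadic_params a l" and C: "DC k m \<subseteq> (\<Union>i. cube (p i) (r i))"
  have rpos: "0 < r i" for i
  proof -
    obtain kk mm where "p i = crn kk mm \<and> r i = sd kk" using params_DC[OF P[rule_format]] by blast
    thus ?thesis using sd_pos by simp
  qed
  show "ennreal (Lk k) \<le> (\<Sum>i. ennreal (r i powr \<beta>))"
  proof (cases "\<exists>i. sd k \<le> r i")
    case True then obtain i where "sd k \<le> r i" by blast
    hence "ennreal (Lk k) \<le> ennreal (r i powr \<beta>)" by (intro ennreal_leI sdL_le)
    also have "\<dots> \<le> (\<Sum>i. ennreal (r i powr \<beta>))"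
      by (rule le_suminf_ennreal)
    finally show ?thesis .
  next
    case False hence small: "\<And>i. r i < sd k" by (auto simp: not_le)
    define n where "n = real CARD('d)"
    define c where "c = sd k powr (\<beta> - n)"
    have c0: "0 \<le> c" by (simp add: c_def)
    have trm: "c * r i powr n \<le> r i powr \<beta>" for i
    proof -
      have "sd k powr (\<beta> - n) \<le> r i powr (\<beta> - n)"
        using bled rpos[of i] small[of i] by (intro powr_mono2') (auto simp: n_def)
      hence "c * r i powr n \<le> r i powr (\<beta> - n) * r i powr n"
        by (simp add: c_def mult_right_mono)
      also have "\<dots> = r i powr \<beta>" by (simp add: powr_add[symmetric])
      finally show ?thesis .
    qed
    have leb: "ennreal (sd k powr n) \<le> (\<Sum>i. ennreal (r i powr n))"
    proof -
      have "box (crn k m) (crn k m + (\<chi> i. sd k)) \<subseteq> DC k m"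
      proof
        fix x assume "x \<in> box (crn k m) (crn k m + (\<chi> i. sd k))"
        hence "\<forall>i. crn k m $ i < x$i \<and> x$i < crn k m $ i + sd k" by (simp add: mem_box_cart)
        thus "x \<in> DC k m" by (auto simp: DC_def cube_def intro: less_imp_le)
      qed
      also have "\<dots> \<subseteq> (\<Union>i. cbox (p i) (p i + (\<chi> j. r i)))"
      proof -
        have cb: "cube (p i) (r i) \<subseteq> cbox (p i) (p i + (\<chi> j. r i))" for i
        proof
          fix x assume "x \<in> cube (p i) (r i)"
          hence "\<forall>j. p i $ j \<le> x$j \<and> x$j < p i $ j + r i" by (simp add: cube_def)
          thus "x \<in> cbox (p i) (p i + (\<chi> j. r i))" by (auto simp: mem_box_cart intro: less_imp_le)
        qed
        have "(\<Union>i. cube (p i) (r i)) \<subseteq> (\<Union>i. cbox (p i) (p i + (\<chi> j. r i)))"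
          by (rule UN_mono) (simp_all add: cb)
        with C show ?thesis by (rule order_trans)
      qed
      finally have sub: "box (crn k m) (crn k m + (\<chi> i. sd k)) \<subseteq> (\<Union>i. cbox (p i) (p i + (\<chi> j. r i)))" .
      have "ennreal (sd k powr n) = emeasure lborel (box (crn k m) (crn k m + (\<chi> i. sd k)))"
        using sd_pos[of k] by (simp add: vol_cbox n_def powr_realpow)
      also have "\<dots> \<le> emeasure lborel (\<Union>i. cbox (p i) (p i + (\<chi> j. r i)))"
        by (rule emeasure_mono[OF sub]) (intro sets.countable_UN, auto)
      also have "\<dots> \<le> (\<Sum>i. emeasure lborel (cbox (p i) (p i + (\<chi> j. r i))))"
        by (rule emeasure_subadditive_countably) auto
      also have "\<dots> = (\<Sum>i. ennreal (r i powr n))"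
        using rpos by (simp add: vol_cbox less_imp_le n_def powr_realpow)
      finally show ?thesis .
    qed
    have "ennreal (Lk k) = ennreal c * ennreal (sd k powr n)"
      using sd_pos[of k] by (simp add: Lk_def c_def ennreal_mult[symmetric] powr_add[symmetric])
    also have "\<dots> \<le> ennreal c * (\<Sum>i. ennreal (r i powr n))"
      by (rule mult_left_mono[OF leb]) simp
    also have "\<dots> = (\<Sum>i. ennreal (c * r i powr n))"
      using c0 by (simp add: ennreal_mult)
    also have "\<dots> \<le> (\<Sum>i. ennreal (r i powr \<beta>))"
      by (intro suminf_le ennreal_leI trm) auto
    finally show ?thesis .
  qed
qed

lemma H_cube_eq: "H (DC k m) = ennreal (Lk k)"
  using H_cube_ge H_cube_le[of "DC k m" k m] by (simp add: antisym)

lemma shift_params: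
  assumes "0 \<le> j" "\<forall>i. mv$i \<in> \<int>"
  shows "(crn k m + sd (k + j) *\<^sub>R mv, sd (k + j)) \<in> dyadic_params a l"
proof -
  define m2 where "m2 i = 2^nat j * m i + \<lfloor>mv$i\<rfloor>" for i
  have s: "sd k = sd (k + j) * 2^nat j"
  proof -
    have "sd (k + j) * 2^nat j = 2 powr (- real_of_int j) * 2 powr (real_of_int j) * sd k"
      using assms(1) by (simp add: sd_add powr_realpow[symmetric])
    thus ?thesis by (simp add: powr_add[symmetric])
  qed
  have mv: "mv$i = real_of_int \<lfloor>mv$i\<rfloor>" for i using assms(2) by (auto elim!: Ints_cases)
  have "crn k m + sd (k + j) *\<^sub>R mv = crn (k + j) m2"
    unfolding crn_def m2_def vec_eq_iff
    by (auto simp: s algebra_simps mv[symmetric])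
  thus ?thesis using DC_params by simp
qed

lemma H_loc:
  assumes E: "E \<subseteq> DC k m"
  shows "H E \<le> hdy \<beta> (crn k m) (sd k) E"
  unfolding hdy_def[of \<beta> "crn k m" "sd k"]
proof (rule Inf_greatest, clarify)
  fix p :: "nat \<Rightarrow> real^'d" and s :: "nat \<Rightarrow> real"
  assume P: "\<forall>i. (p i, s i) \<in> dyadic_params (crn k m) (sd k)"
    and C: "E \<subseteq> (\<Union>i. cube (p i) (s i))"
  define p' where "p' i = (if s i \<le> sd k then p i else crn k m)" for i
  define s' where "s' i = (if s i \<le> sd k then s i else sd k)" for i
  have P': "(p' i, s' i) \<in> dyadic_params a l" for i
  proof (cases "s i \<le> sd k")
    case True
    from P obtain j mv where pj: "p i = crn k m + (2 powr (- real_of_int j) * sd k) *\<^sub>R mv"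
      and sj: "s i = 2 powr (- real_of_int j) * sd k" and mv: "\<forall>i. mv$i \<in> \<int>"
      unfolding dyadic_params_def by blast
    have sj': "s i = sd (k + j)" using sj by (simp add: sd_add)
    hence "0 \<le> j" using True sd_le_iff by simp
    thus ?thesis using shift_params[OF _ mv, of j k m] True pj sj' by (simp add: p'_def s'_def sd_add)
  next
    case False thus ?thesis using DC_params by (simp add: p'_def s'_def)
  qed
  have "H E \<le> (\<Sum>i. ennreal (s' i powr \<beta>))"
  proof (rule H_le)
    show "\<forall>i. (p' i, s' i) \<in> dyadic_params a l" using P' by blast
    show "E \<subseteq> (\<Union>i. cube (p' i) (s' i))"
    proof
      fix x assume x: "x \<in> E"
      then obtain i where "x \<in> cube (p i) (s i)" using C by blast
      hence "x \<in> cube (p' i) (s' i)" using x E by (auto simp: p'_def s'_def DC_def)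
      thus "x \<in> (\<Union>i. cube (p' i) (s' i))" by blast
    qed
  qed
  also have "\<dots> \<le> (\<Sum>i. ennreal (s i powr \<beta>))"
  proof (intro suminf_le ennreal_leI)
    fix i
    show "s' i powr \<beta> \<le> s i powr \<beta>"
    proof (cases "s i \<le> sd k")
      case False thus ?thesis using bpos sd_pos[of k] by (simp add: s'_def powr_mono2)
    qed (simp add: s'_def)
  qed auto
  finally show "H E \<le> (\<Sum>i. ennreal (s i powr \<beta>))" .
qed

end

context dyad begin

lemma cover_levels:
  assumes P: "\<forall>i. (p i, r i) \<in> dyadic_params a l"
  obtains lev mm where "\<And>i. p i = crn (lev i) (mm i) \<and> r i = sd (lev i)"
proof -
  have "\<forall>i. \<exists>km. p i = crn (fst km) (snd km) \<and> r i = sd (fst km)"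
    using params_DC[OF P[rule_format]] by fastforce
  then have "\<exists>KM. \<forall>i. p i = crn (fst (KM i)) (snd (KM i)) \<and> r i = sd (fst (KM i))" by (rule choice)
  then obtain KM where "\<forall>i. p i = crn (fst (KM i)) (snd (KM i)) \<and> r i = sd (fst (KM i))" by blast
  thus ?thesis using that[of "\<lambda>i. fst (KM i)" "\<lambda>i. snd (KM i)"] by blast
qed

lemma H_children:
  assumes E: "E \<subseteq> DC k m" and less: "H E < ennreal (Lk k)" and M: "finite M"
  shows "(\<Sum>m'\<in>M. H (E \<inter> DC (k+1) m')) \<le> H E"
proof (rule dense_ge)
  fix X assume X: "H E < X"
  have lt: "H E < min X (ennreal (Lk k))" using X less by simp
  obtain p r where P: "\<forall>i. (p i, r i) \<in> dyadic_params a l" and C: "E \<subseteq> (\<Union>i. cube (p i) (r i))"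
      and cs: "(\<Sum>i. ennreal (r i powr \<beta>)) < min X (ennreal (Lk k))"
    using H_less_cover[OF lt] by blast
  define c where "c i = ennreal (r i powr \<beta>)" for i
  have small: "r i < sd k" for i
  proof (rule ccontr)
    assume "\<not> r i < sd k"
    hence "ennreal (Lk k) \<le> ennreal (r i powr \<beta>)" by (intro ennreal_leI sdL_le) simp
    also have "\<dots> \<le> (\<Sum>i. ennreal (r i powr \<beta>))" by (rule le_suminf_ennreal)
    finally have "ennreal (Lk k) \<le> (\<Sum>i. ennreal (r i powr \<beta>))" .
    moreover have "(\<Sum>i. ennreal (r i powr \<beta>)) < ennreal (Lk k)" using cs by simp
    ultimately show False by (blast dest: leD)
  qed
  obtain lev mm where pr: "\<And>i. p i = crn (lev i) (mm i) \<and> r i = sd (lev i)"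
    using cover_levels[OF P] by blast
  have cubeDC: "cube (p i) (r i) = DC (lev i) (mm i)" for i by (simp add: DC_def pr)
  have levgt: "k + 1 \<le> lev i" for i using small[of i] pr[of i] sd_less_iff by simp
  define I where "I m' = {i. cube (p i) (r i) \<inter> DC (k+1) m' \<noteq> {}}" for m'
  have HI: "H (E \<inter> DC (k+1) m') \<le> (\<Sum>i. if i \<in> I m' then c i else 0)" for m'
    unfolding c_def
  proof (rule H_le_sub)
    show "\<forall>i\<in>I m'. (p i, r i) \<in> dyadic_params a l" using P by blast
    show "E \<inter> DC (k + 1) m' \<subseteq> (\<Union>i\<in>I m'. cube (p i) (r i))"
    proof
      fix x assume x: "x \<in> E \<inter> DC (k + 1) m'"
      then obtain i where "x \<in> cube (p i) (r i)" using C by blast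
      hence "i \<in> I m'" "x \<in> cube (p i) (r i)" using x by (auto simp: I_def)
      thus "x \<in> (\<Union>i\<in>I m'. cube (p i) (r i))" by blast
    qed
  qed
  have uniq: "m1 = m2" if "i \<in> I m1" "i \<in> I m2" for i m1 m2
  proof -
    from that obtain y1 y2 where y: "y1 \<in> DC (lev i) (mm i)" "y1 \<in> DC (k+1) m1"
        "y2 \<in> DC (lev i) (mm i)" "y2 \<in> DC (k+1) m2"
      by (auto simp: I_def cubeDC)
    have "DC (lev i) (mm i) \<subseteq> DC (k+1) m1" using DC_nest[OF levgt y(2) y(1)] .
    moreover have "DC (lev i) (mm i) \<subseteq> DC (k+1) m2" using DC_nest[OF levgt y(4) y(3)] .
    ultimately have "crn (lev i) (mm i) \<in> DC (k+1) m1" "crn (lev i) (mm i) \<in> DC (k+1) m2"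
      using crn_in by blast+
    thus ?thesis by (simp add: mem_DC)
  qed
  have pt: "(\<Sum>m'\<in>M. if i \<in> I m' then c i else 0) \<le> c i" for i
  proof (cases "\<exists>m0\<in>M. i \<in> I m0")
    case True
    then obtain m0 where m0: "m0 \<in> M" "i \<in> I m0" by blast
    have "(\<Sum>m'\<in>M. if i \<in> I m' then c i else 0) = (\<Sum>m'\<in>M. if m' = m0 then c i else 0)"
      by (rule sum.cong) (use uniq m0 in auto)
    also have "\<dots> = c i" using m0 M by simp
    finally show ?thesis by simp
  next
    case False thus ?thesis by simp
  qed
  have "(\<Sum>m'\<in>M. H (E \<inter> DC (k+1) m')) \<le> (\<Sum>m'\<in>M. \<Sum>i. if i \<in> I m' then c i else 0)"
    by (rule sum_mono) (rule HI)
  also have "\<dots> = (\<Sum>i. \<Sum>m'\<in>M. if i \<in> I m' then c i else 0)"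
    by (rule suminf_sum[symmetric]) auto
  also have "\<dots> \<le> (\<Sum>i. c i)" by (intro suminf_le pt) auto
  also have "\<dots> < min X (ennreal (Lk k))" using cs by (simp add: c_def)
  finally show "(\<Sum>m'\<in>M. H (E \<inter> DC (k+1) m')) \<le> X" by (simp add: less_imp_le)
qed

lemma H_density:
  assumes A: "A \<subseteq> DC k0 m0" "A \<subseteq> G" and eta: "0 \<le> \<eta>" "\<eta> < 1"
    and dens: "\<And>x k. x \<in> A \<Longrightarrow> k0 \<le> k \<Longrightarrow> H (G \<inter> DC k (idx k x)) \<le> ennreal (\<eta> * Lk k)"
  shows "H A = 0"
proof -
  have key: "H A \<le> ennreal \<eta> * (\<Sum>i. ennreal (r i powr \<beta>))"
    if P: "\<forall>i. (p i, r i) \<in> dyadic_params a l" and C: "A \<subseteq> (\<Union>i. cube (p i) (r i))" for p r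
  proof -
    have "A \<subseteq> (\<Union>i. A \<inter> cube (p i) (r i))" using C by blast
    hence "H A \<le> H (\<Union>i. A \<inter> cube (p i) (r i))" by (rule H_mono)
    also have "\<dots> \<le> (\<Sum>i. H (A \<inter> cube (p i) (r i)))" by (rule H_sub)
    also have "\<dots> \<le> (\<Sum>i. ennreal (\<eta> * r i powr \<beta>))"
    proof (intro suminf_le)
      fix i show "H (A \<inter> cube (p i) (r i)) \<le> ennreal (\<eta> * r i powr \<beta>)"
      proof (cases "A \<inter> cube (p i) (r i) = {}")
        case True thus ?thesis by (simp add: H_empty)
      next
        case False then obtain x where x: "x \<in> A" "x \<in> cube (p i) (r i)" by blast
        obtain j mm where pj: "p i = crn j mm" "r i = sd j" using params_DC[OF P[rule_format]] by blast
        have cDC: "cube (p i) (r i) = DC j mm" by (simp add: pj DC_def)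
        have xm: "mm = idx j x" using x(2) by (simp add: cDC mem_DC)
        show ?thesis
        proof (cases "k0 \<le> j")
          case True
          have "H (A \<inter> cube (p i) (r i)) \<le> H (G \<inter> DC j (idx j x))"
            using A by (intro H_mono) (auto simp: cDC xm)
          also have "\<dots> \<le> ennreal (\<eta> * Lk j)" using dens x True by blast
          finally show ?thesis by (simp add: pj Lk_def)
        next
          case False
          have im: "idx k0 x = m0" using x(1) A(1) mem_DC by blast
          have "H (A \<inter> cube (p i) (r i)) \<le> H (G \<inter> DC k0 (idx k0 x))"
            using A im by (intro H_mono) auto
          also have "\<dots> \<le> ennreal (\<eta> * Lk k0)" using dens x by simp
          also have "\<dots> \<le> ennreal (\<eta> * Lk j)"
            using False eta Lk_le_iff[of k0 j] by (intro ennreal_leI mult_left_mono) auto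
          finally show ?thesis by (simp add: pj Lk_def)
        qed
      qed
    qed auto
    also have "\<dots> = ennreal \<eta> * (\<Sum>i. ennreal (r i powr \<beta>))" using eta by (simp add: ennreal_mult)
    finally show ?thesis .
  qed
  have fin: "H A \<le> ennreal (Lk k0)" using A(1) by (rule H_cube_le)
  then obtain h where h: "H A = ennreal h" "0 \<le> h"
    by (cases "H A") (auto simp: top_unique)
  show ?thesis
  proof (rule ccontr)
    assume "H A \<noteq> 0"
    hence hp: "0 < h" using h by auto
    define \<delta> where "\<delta> = (1 - \<eta>) * h / 2"
    have dp: "0 < \<delta>" using hp eta by (simp add: \<delta>_def)
    have lt: "H A < ennreal (h + \<delta>)" using h hp dp by (simp add: ennreal_lessI)
    obtain p r where P: "\<forall>i. (p i, r i) \<in> dyadic_params a l" and C: "A \<subseteq> (\<Union>i. cube (p i) (r i))"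
      and cs: "(\<Sum>i. ennreal (r i powr \<beta>)) < ennreal (h + \<delta>)"
      using H_less_cover[OF lt] by blast
    have "ennreal h \<le> ennreal \<eta> * (\<Sum>i. ennreal (r i powr \<beta>))" using key[OF P C] h by simp
    also have "\<dots> \<le> ennreal \<eta> * ennreal (h + \<delta>)" using cs by (intro mult_left_mono) auto
    also have "\<dots> = ennreal (\<eta> * (h + \<delta>))" using eta dp h by (simp add: ennreal_mult)
    finally have "h \<le> \<eta> * (h + \<delta>)" using eta dp h by (simp add: ennreal_le_iff)
    moreover have "\<eta> * (h + \<delta>) < h"
    proof -
      have "\<eta> * \<delta> \<le> \<delta>" using eta dp by (simp add: mult_left_le_one_le less_imp_le)
      hence "\<eta> * (h + \<delta>) \<le> \<eta> * h + \<delta>" by (simp add: algebra_simps)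
      also have "\<eta> * h + \<delta> < h"
      proof -
        have d2: "\<delta> = (h - \<eta> * h) / 2" by (simp add: \<delta>_def algebra_simps)
        have "\<eta> * h < h" using mult_strict_right_mono[OF eta(2) hp] by simp
        thus ?thesis unfolding d2 by (simp add: field_simps)
      qed
      finally show ?thesis .
    qed
    ultimately show False by simp
  qed
qed

end

context dyad begin

definition selm :: "(real^'d) set \<Rightarrow> int \<Rightarrow> ('d \<Rightarrow> int) \<Rightarrow> bool" where
  "selm F k m \<longleftrightarrow> ennreal (1/2 * Lk k) < H (F \<inter> DC k m)"

lemma idx_crn_mono: "j \<le> k \<Longrightarrow> idx j (crn k (idx k x)) = idx j x"
  using idx_eq_mono[of j k "crn k (idx k x)" x] idx_crn by simp

lemma idx_succ: "idx j y i = idx (j+1) y i div 2"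
  using idx_anc[of j "j+1" y i] by simp

lemma div2_cases: "(z::int) div 2 = w \<Longrightarrow> z = 2*w \<or> z = 2*w+1"
  by presburger

lemma children_finite: "finite {m'::'d \<Rightarrow> int. \<forall>i. m' i div 2 = m i}"
proof -
  have "{m'::'d \<Rightarrow> int. \<forall>i. m' i div 2 = m i} \<subseteq> Pi UNIV (\<lambda>i. {2 * m i, 2 * m i + 1})"
  proof
    fix m' :: "'d \<Rightarrow> int" assume "m' \<in> {m'. \<forall>i. m' i div 2 = m i}"
    hence "m' i div 2 = m i" for i by simp
    hence "m' i \<in> {2 * m i, 2 * m i + 1}" for i using div2_cases[of "m' i" "m i"] by auto
    thus "m' \<in> Pi UNIV (\<lambda>i. {2 * m i, 2 * m i + 1})" by auto
  qed
  moreover have "finite (Pi UNIV (\<lambda>i. {2 * m i, 2 * m i + 1}))"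
    using finite_PiE[of UNIV "\<lambda>i. {2 * m i, 2 * m i + 1}"] by (simp add: PiE_UNIV_domain)
  ultimately show ?thesis by (rule finite_subset)
qed

lemma two_half: "ennreal x = 2 * ennreal (1/2 * x)" if "0 \<le> x"
  using that ennreal_mult[of 2 "1/2*x"] by simp

lemma stop_sum:
  assumes W: "finite W"
    and Wp: "\<And>s. s \<in> W \<Longrightarrow> k0 \<le> fst s \<and> selm F (fst s) (snd s) \<and>
        (\<forall>j. k0 \<le> j \<and> j < fst s \<longrightarrow> \<not> selm F j (idx j (crn (fst s) (snd s)))) \<and>
        idx k0 (crn (fst s) (snd s)) = m0"
  shows "(\<Sum>s\<in>W. ennreal (Lk (fst s))) \<le> 2 * H (F \<inter> DC k0 m0)"
proof (cases "W = {}")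
  case True thus ?thesis by simp
next
  case False
  define N where "N = Max (fst ` W)"
  have sN: "fst s \<le> N" if "s \<in> W" for s using W that by (simp add: N_def)
  obtain s0 where "s0 \<in> W" using False by blast
  hence k0N: "k0 \<le> N" using Wp[of s0] sN[of s0] by simp
  define ins where "ins s j m \<longleftrightarrow> j \<le> fst s \<and> idx j (crn (fst s) (snd s)) = m" for s j m
  define T where "T j m = (\<Sum>s\<in>{s\<in>W. ins s j m}. ennreal (Lk (fst s)))" for j m
  have selcase: "s = (j, m)" if s: "s \<in> W" "ins s j m" "k0 \<le> j" "selm F j m" for s j m
  proof -
    have "\<not> j < fst s" using Wp[OF s(1)] s(2-4) by (auto simp: ins_def)
    hence fj: "fst s = j" using s(2) by (simp add: ins_def)
    moreover have "snd s = m" using s(2) fj by (simp add: ins_def idx_crn)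
    ultimately show "s = (j, m)" by (cases s) simp
  qed
  have nselcase: "j < fst s" if s: "s \<in> W" "ins s j m" "\<not> selm F j m" for s j m
  proof (rule ccontr)
    assume "\<not> j < fst s" hence fj: "fst s = j" using s(2) by (simp add: ins_def)
    hence "snd s = m" using s(2) by (simp add: ins_def idx_crn)
    thus False using Wp[OF s(1)] s(3) fj by simp
  qed
  have sel_bound: "T j m \<le> 2 * H (F \<inter> DC j m)" if j: "k0 \<le> j" and sl: "selm F j m" for j m
  proof -
    have sub: "{s\<in>W. ins s j m} \<subseteq> {(j, m)}" using selcase j sl by blast
    have "T j m \<le> (\<Sum>s\<in>{(j, m)}. ennreal (Lk (fst s)))"
      unfolding T_def by (rule sum_mono2[OF _ sub]) auto
    also have "\<dots> = ennreal (Lk j)" by simp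
    also have "\<dots> = 2 * ennreal (1/2 * Lk j)" using Lk_pos[of j] by (intro two_half) simp
    also have "\<dots> \<le> 2 * H (F \<inter> DC j m)" using sl by (intro mult_left_mono) (auto simp: selm_def)
    finally show ?thesis .
  qed
  have claim: "\<forall>m. k0 \<le> N - int r \<longrightarrow> T (N - int r) m \<le> 2 * H (F \<inter> DC (N - int r) m)" for r
  proof (induction r)
    case 0
    show ?case
    proof (intro allI impI)
      fix m assume k: "k0 \<le> N - int 0"
      show "T (N - int 0) m \<le> 2 * H (F \<inter> DC (N - int 0) m)"
      proof (cases "selm F N m")
        case True thus ?thesis using sel_bound k by simp
      next
        case False
        have emp: "{s\<in>W. ins s N m} = {}" using nselcase[of _ N m] False sN by force
        have "T N m = 0" unfolding T_def emp by simp
        thus ?thesis by simp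
      qed
    qed
  next
    case (Suc r)
    show ?case
    proof (intro allI impI)
      fix m
      define j where "j = N - int (Suc r)"
      have jj: "j + 1 = N - int r" by (simp add: j_def)
      assume k: "k0 \<le> N - int (Suc r)"
      hence kj: "k0 \<le> j" by (simp add: j_def)
      have "T j m \<le> 2 * H (F \<inter> DC j m)"
      proof (cases "selm F j m")
        case True thus ?thesis using sel_bound kj by simp
      next
        case False
        define Ch where "Ch = {m'::'d \<Rightarrow> int. \<forall>i. m' i div 2 = m i}"
        have Chf: "finite Ch" unfolding Ch_def by (rule children_finite)
        have split: "{s\<in>W. ins s j m} = (\<Union>m'\<in>Ch. {s\<in>W. ins s (j+1) m'})"
        proof
          show "{s\<in>W. ins s j m} \<subseteq> (\<Union>m'\<in>Ch. {s\<in>W. ins s (j+1) m'})"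
          proof
            fix s assume s: "s \<in> {s\<in>W. ins s j m}"
            hence lt: "j < fst s" using nselcase False by blast
            define m' where "m' = idx (j+1) (crn (fst s) (snd s))"
            have "m' \<in> Ch" using s idx_succ[of j "crn (fst s) (snd s)"]
              by (auto simp: Ch_def m'_def ins_def)
            moreover have "ins s (j+1) m'" using lt by (simp add: ins_def m'_def)
            ultimately show "s \<in> (\<Union>m'\<in>Ch. {s\<in>W. ins s (j+1) m'})" using s by blast
          qed
          show "(\<Union>m'\<in>Ch. {s\<in>W. ins s (j+1) m'}) \<subseteq> {s\<in>W. ins s j m}"
          proof
            fix s assume "s \<in> (\<Union>m'\<in>Ch. {s\<in>W. ins s (j+1) m'})"
            then obtain m' where m': "m' \<in> Ch" "s \<in> W" "ins s (j+1) m'" by blast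
            have "idx j (crn (fst s) (snd s)) = m"
              using m' idx_succ[of j "crn (fst s) (snd s)"] by (auto simp: Ch_def ins_def fun_eq_iff)
            thus "s \<in> {s\<in>W. ins s j m}" using m' by (simp add: ins_def)
          qed
        qed
        have "T j m = (\<Sum>m'\<in>Ch. T (j+1) m')"
          unfolding T_def split
          by (rule sum.UNION_disjoint) (use Chf W in \<open>auto simp: ins_def\<close>)
        also have "\<dots> \<le> (\<Sum>m'\<in>Ch. 2 * H (F \<inter> DC (j+1) m'))"
          using Suc.IH kj jj by (intro sum_mono) simp
        also have "\<dots> = 2 * (\<Sum>m'\<in>Ch. H ((F \<inter> DC j m) \<inter> DC (j+1) m'))"
        proof -
          have chsub: "DC (j+1) m' \<subseteq> DC j m" if "m' \<in> Ch" for m'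
            using that idx_succ[of j] by (auto simp: Ch_def mem_DC fun_eq_iff)
          hence "(\<Sum>m'\<in>Ch. H (F \<inter> DC (j+1) m')) = (\<Sum>m'\<in>Ch. H ((F \<inter> DC j m) \<inter> DC (j+1) m'))"
          proof (intro sum.cong refl)
            fix m' assume "m' \<in> Ch"
            hence "DC j m \<inter> DC (j+1) m' = DC (j+1) m'" using chsub by blast
            thus "H (F \<inter> DC (j+1) m') = H ((F \<inter> DC j m) \<inter> DC (j+1) m')" by (simp add: Int_assoc)
          qed
          thus ?thesis by (metis sum_distrib_left)
        qed
        also have "\<dots> \<le> 2 * H (F \<inter> DC j m)"
        proof (intro mult_left_mono H_children Chf)
          show "F \<inter> DC j m \<subseteq> DC j m" by blast
          have "H (F \<inter> DC j m) \<le> ennreal (1/2 * Lk j)" using False by (simp add: selm_def not_less)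
          also have "\<dots> < ennreal (Lk j)" using Lk_pos[of j] by (simp add: ennreal_lessI)
          finally show "H (F \<inter> DC j m) < ennreal (Lk j)" .
        qed simp
        finally show ?thesis .
      qed
      thus "T (N - int (Suc r)) m \<le> 2 * H (F \<inter> DC (N - int (Suc r)) m)" by (simp only: j_def)
    qed
  qed
  have "(\<Sum>s\<in>W. ennreal (Lk (fst s))) = T k0 m0"
    unfolding T_def using Wp by (intro sum.cong) (auto simp: ins_def)
  also have "\<dots> \<le> 2 * H (F \<inter> DC k0 m0)"
    using claim[of "nat (N - k0)"] k0N by simp
  finally show ?thesis .
qed

lemma H_UN_countable:
  fixes w :: "'s \<Rightarrow> ennreal"
  assumes S: "countable S" and X: "\<And>s. s \<in> S \<Longrightarrow> H (X s) \<le> ennreal \<theta> * w s"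
    and Bd: "\<And>S'. finite S' \<Longrightarrow> S' \<subseteq> S \<Longrightarrow> (\<Sum>s\<in>S'. w s) \<le> Bd"
  shows "H (\<Union>s\<in>S. X s) \<le> ennreal \<theta> * Bd"
proof (cases "S = {}")
  case True thus ?thesis by (simp add: H_empty)
next
  case False
  define e where "e = to_nat_on S"
  define f where "f = from_nat_into S"
  have fe: "f (e s) = s" if "s \<in> S" for s using S that by (simp add: e_def f_def)
  have fS: "f n \<in> S" for n using False by (simp add: f_def from_nat_into)
  define Y where "Y n = (if n \<in> e ` S then X (f n) else {})" for n
  define wn where "wn n = (if n \<in> e ` S then w (f n) else 0)" for n
  have "(\<Union>s\<in>S. X s) \<subseteq> (\<Union>n. Y n)"
  proof
    fix x assume "x \<in> (\<Union>s\<in>S. X s)"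
    then obtain s where s: "s \<in> S" "x \<in> X s" by blast
    hence "x \<in> Y (e s)" by (simp add: Y_def fe)
    thus "x \<in> (\<Union>n. Y n)" by blast
  qed
  hence "H (\<Union>s\<in>S. X s) \<le> H (\<Union>n. Y n)" by (rule H_mono)
  also have "\<dots> \<le> (\<Sum>n. H (Y n))" by (rule H_sub)
  also have "\<dots> \<le> (\<Sum>n. ennreal \<theta> * wn n)"
    by (intro suminf_le) (auto simp: Y_def wn_def X fS H_empty)
  also have "\<dots> = ennreal \<theta> * (\<Sum>n. wn n)" by simp
  also have "(\<Sum>n. wn n) \<le> Bd"
  proof (rule suminf_le_const)
    fix N
    have inj: "inj_on f ({..<N} \<inter> e ` S)" by (rule inj_onI) (auto simp: fe)
    have "sum wn {..<N} = (\<Sum>n\<in>{..<N} \<inter> e ` S. w (f n))"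
      by (simp add: wn_def sum.inter_restrict)
    also have "\<dots> = (\<Sum>s\<in>f ` ({..<N} \<inter> e ` S). w s)"
      by (simp add: sum.reindex[OF inj])
    also have "\<dots> \<le> Bd" by (rule Bd) (auto simp: fe)
    finally show "sum wn {..<N} \<le> Bd" .
  qed auto
  hence "ennreal \<theta> * (\<Sum>n. wn n) \<le> ennreal \<theta> * Bd" by (rule mult_left_mono) simp
  finally show ?thesis .
qed

lemma good_point:
  assumes "H X + H Y < ennreal (Lk k)"
  shows "\<exists>y\<in>DC k m. y \<notin> X \<and> y \<notin> Y"
proof (rule ccontr)
  assume "\<not> ?thesis"
  hence "DC k m \<subseteq> X \<union> Y" by blast
  hence "H (DC k m) \<le> H (X \<union> Y)" by (rule H_mono)
  also have "\<dots> \<le> H X + H Y" by (rule H_Un)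
  finally show False using assms H_cube_eq[of k m] by simp
qed

lemma ennreal_div_le: "0 < c \<Longrightarrow> ennreal c * X \<le> Y \<Longrightarrow> X \<le> ennreal (1/c) * Y"
proof -
  assume c: "0 < c" and h: "ennreal c * X \<le> Y"
  have "X = ennreal (1/c) * (ennreal c * X)"
    using c by (simp add: mult.assoc[symmetric] ennreal_mult[symmetric])
  also have "\<dots> \<le> ennreal (1/c) * Y" by (rule mult_left_mono[OF h]) simp
  finally show ?thesis .
qed

end

lemma arith1: fixes B L p :: real assumes "0 < B" "1 \<le> p"
  shows "B * L / (4 * (1 + p) * B) + B * (p * L) / (4 * (1 + p) * B) = L / 4"
proof -
  have "4 * (1 + p) * B \<noteq> 0" using assms by auto
  thus ?thesis using assms by (simp add: divide_simps) (simp add: algebra_simps)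
qed

lemma arith2: fixes B L p :: real assumes "0 < B" "1 \<le> p"
  shows "B * L / (4 * (1 + p) * B) = L / (4 * (1 + p))"
  using assms by simp

locale jn = dyad \<beta> a l for \<beta> :: real and a :: "real^'d" and l :: real +
  fixes u :: "real^'d \<Rightarrow> real" and B :: real and cc :: "int \<Rightarrow> ('d \<Rightarrow> int) \<Rightarrow> real"
  assumes Bpos: "0 < B"
    and osc: "\<And>k m. 0 \<le> k \<Longrightarrow> DC k m \<subseteq> DC 0 (\<lambda>_. 0) \<Longrightarrow>
        choq H (DC k m) (\<lambda>x. \<bar>u x - cc k m\<bar>) \<le> ennreal (B * Lk k)"
begin

definition lam where "lam = 4 * B"
definition mu where "mu = 4 * (1 + 2 powr \<beta>) * B"
definition KK where "KK = lam + 3 * mu"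

lemma lam_pos: "0 < lam" using Bpos by (simp add: lam_def)
lemma mu_pos: "0 < mu" using Bpos by (simp add: mu_def add_pos_nonneg)
lemma lam_KK: "lam \<le> KK" using mu_pos by (simp add: KK_def)

lemma osc_small:
  assumes "0 \<le> k" "DC k m \<subseteq> DC 0 (\<lambda>_. 0)" "0 < t"
  shows "H {x\<in>DC k m. t < \<bar>u x - cc k m\<bar>} \<le> ennreal (B * Lk k / t)"
proof -
  have "ennreal t * H {x\<in>DC k m. t < \<bar>u x - cc k m\<bar>} \<le> choq H (DC k m) (\<lambda>x. \<bar>u x - cc k m\<bar>)"
    using choq_cheb[of H t "DC k m" "\<lambda>x. \<bar>u x - cc k m\<bar>"] H_mono assms(3) by blast
  also have "\<dots> \<le> ennreal (B * Lk k)" using osc assms by blast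
  finally have "H {x\<in>DC k m. t < \<bar>u x - cc k m\<bar>} \<le> ennreal (1/t) * ennreal (B * Lk k)"
    using assms(3) by (rule ennreal_div_le[rotated])
  also have "\<dots> = ennreal (B * Lk k / t)"
    using assms(3) Bpos Lk_pos[of k] by (simp add: ennreal_mult[symmetric])
  finally show ?thesis .
qed

lemma pow_ge1: "1 \<le> 2 powr \<beta>" using bpos ge_one_powr_ge_zero[of 2 \<beta>] by simp

lemma parent_close:
  assumes k: "0 \<le> k - 1" and sub: "DC k m \<subseteq> DC (k-1) m'" and Q: "DC (k-1) m' \<subseteq> DC 0 (\<lambda>_. 0)"
  shows "\<bar>cc k m - cc (k-1) m'\<bar> \<le> 2 * mu"
proof -
  define X where "X = {y\<in>DC k m. mu < \<bar>u y - cc k m\<bar>}"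
  define Y where "Y = {y\<in>DC k m. mu < \<bar>u y - cc (k-1) m'\<bar>}"
  have hX: "H X \<le> ennreal (B * Lk k / mu)"
    unfolding X_def using k sub Q mu_pos by (intro osc_small) auto
  have "H Y \<le> H {y\<in>DC (k-1) m'. mu < \<bar>u y - cc (k-1) m'\<bar>}"
    unfolding Y_def using sub by (intro H_mono) auto
  also have "\<dots> \<le> ennreal (B * Lk (k-1) / mu)" using k Q mu_pos by (intro osc_small) auto
  finally have hY: "H Y \<le> ennreal (B * (2 powr \<beta> * Lk k) / mu)" by (simp add: Lk_pred)
  have "H X + H Y \<le> ennreal (B * Lk k / mu) + ennreal (B * (2 powr \<beta> * Lk k) / mu)"
    using hX hY by (rule add_mono)
  also have "\<dots> = ennreal (B * Lk k / mu + B * (2 powr \<beta> * Lk k) / mu)"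
    using Bpos Lk_pos[of k] mu_pos by (subst ennreal_plus) auto
  also have "B * Lk k / mu + B * (2 powr \<beta> * Lk k) / mu = Lk k / 4"
    unfolding mu_def by (rule arith1[OF Bpos pow_ge1])
  also have "ennreal (Lk k / 4) < ennreal (Lk k)" using Lk_pos[of k] by (simp add: ennreal_lessI)
  finally obtain y where y: "y \<in> DC k m" "y \<notin> X" "y \<notin> Y" using good_point by blast
  hence "\<bar>u y - cc k m\<bar> \<le> mu" "\<bar>u y - cc (k-1) m'\<bar> \<le> mu" by (auto simp: X_def Y_def)
  thus ?thesis by linarith
qed

lemma top_close:
  assumes k: "0 \<le> k" and Q: "DC k m \<subseteq> DC 0 (\<lambda>_. 0)" and PR: "DC k m \<subseteq> P"
    and HF: "H ({x\<in>P. lam < \<bar>u x - c0\<bar>} \<inter> DC k m) \<le> ennreal (1/2 * Lk k)"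
  shows "\<bar>c0 - cc k m\<bar> \<le> lam + mu"
proof -
  define X where "X = {x\<in>P. lam < \<bar>u x - c0\<bar>} \<inter> DC k m"
  define Y where "Y = {y\<in>DC k m. mu < \<bar>u y - cc k m\<bar>}"
  have hY: "H Y \<le> ennreal (B * Lk k / mu)"
    unfolding Y_def using k Q mu_pos by (intro osc_small) auto
  have "H X + H Y \<le> ennreal (1/2 * Lk k) + ennreal (B * Lk k / mu)"
    using HF hY by (intro add_mono) (auto simp: X_def)
  also have "\<dots> = ennreal (1/2 * Lk k + B * Lk k / mu)"
    using Bpos Lk_pos[of k] mu_pos by (subst ennreal_plus) auto
  also have "1/2 * Lk k + B * Lk k / mu < Lk k"
  proof -
    have "B * Lk k / mu = Lk k / (4 * (1 + 2 powr \<beta>))" unfolding mu_def by (rule arith2[OF Bpos pow_ge1])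
    also have "\<dots> \<le> Lk k / 8"
      using pow_ge1 Lk_pos[of k] by (intro divide_left_mono) auto
    finally have "B * Lk k / mu \<le> Lk k / 8" .
    thus ?thesis using Lk_pos[of k] by linarith
  qed
  hence "ennreal (1/2 * Lk k + B * Lk k / mu) < ennreal (Lk k)" using Lk_pos[of k] by (simp add: ennreal_lessI)
  finally obtain y where y: "y \<in> DC k m" "y \<notin> X" "y \<notin> Y" using good_point by blast
  hence "\<bar>u y - c0\<bar> \<le> lam" "\<bar>u y - cc k m\<bar> \<le> mu" using PR by (auto simp: X_def Y_def)
  thus ?thesis by linarith
qed

end

context jn begin

lemma one_step:
  assumes k0: "0 \<le> k0" and PQ: "DC k0 m0 \<subseteq> DC 0 (\<lambda>_. 0)"
    and J: "choq H (DC k0 m0) (\<lambda>x. \<bar>u x - c0\<bar>) \<le> J" and JB: "J \<le> ennreal (B * Lk k0)"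
    and th: "0 \<le> \<theta>" and t: "lam \<le> t"
    and hyp: "\<And>k m. k0 \<le> k \<Longrightarrow> DC k m \<subseteq> DC k0 m0 \<Longrightarrow>
        H {x\<in>DC k m. t - KK < \<bar>u x - cc k m\<bar>} \<le> ennreal (\<theta> * Lk k)"
  shows "ennreal lam * H {x\<in>DC k0 m0. t < \<bar>u x - c0\<bar>} \<le> ennreal (2*\<theta>) * J"
proof -
  define P where "P = DC k0 m0"
  define F where "F = {x\<in>P. lam < \<bar>u x - c0\<bar>}"
  have FP: "F \<subseteq> P" by (auto simp: F_def)
  have hF: "ennreal lam * H F \<le> J"
  proof -
    have "ennreal lam * H F \<le> choq H P (\<lambda>x. \<bar>u x - c0\<bar>)"
      unfolding F_def using choq_cheb[of H lam P "\<lambda>x. \<bar>u x - c0\<bar>"] H_mono lam_pos by blast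
    thus ?thesis using J by (simp add: P_def)
  qed
  have hF4: "H F \<le> ennreal (1/2 * Lk k0)"
  proof -
    have "H F \<le> ennreal (1/lam) * J" using ennreal_div_le[OF lam_pos hF] .
    also have "\<dots> \<le> ennreal (1/lam) * ennreal (B * Lk k0)" using JB by (rule mult_left_mono) simp
    also have "\<dots> = ennreal (Lk k0 / 4)"
      using Bpos lam_pos Lk_pos[of k0] by (simp add: ennreal_mult[symmetric] lam_def)
    also have "\<dots> \<le> ennreal (1/2 * Lk k0)" using Lk_pos[of k0] by (intro ennreal_leI) simp
    finally show ?thesis .
  qed
  define sel where "sel k x \<longleftrightarrow> selm F k (idx k x)" for k x
  have nsel0: "\<not> sel k0 x" if "x \<in> P" for x
  proof -
    have "idx k0 x = m0" using that by (simp add: P_def mem_DC)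
    hence "F \<inter> DC k0 (idx k0 x) = F" using FP by (auto simp: P_def)
    thus ?thesis using hF4 by (simp add: sel_def selm_def not_less)
  qed
  define G where "G = {x\<in>F. \<exists>n. sel (k0 + int n) x}"
  define A where "A = F - G"
  have HA: "H A = 0"
  proof (rule H_density[of A k0 m0 F "1/2"])
    show "A \<subseteq> DC k0 m0" using FP by (auto simp: A_def P_def)
    show "A \<subseteq> F" by (auto simp: A_def)
    fix x k assume x: "x \<in> A" and k: "k0 \<le> k"
    have "\<forall>n. \<not> sel (k0 + int n) x" using x by (auto simp: A_def G_def)
    hence "\<not> sel (k0 + int (nat (k - k0))) x" by blast
    hence "\<not> sel k x" using k by simp
    thus "H (F \<inter> DC k (idx k x)) \<le> ennreal (1/2 * Lk k)" by (simp add: sel_def selm_def not_less)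
  qed auto
  define \<sigma> where "\<sigma> x = (LEAST n. sel (k0 + int n) x)" for x
  define lev where "lev x = k0 + int (\<sigma> x)" for x
  have sig: "sel (lev x) x \<and> (\<forall>n < \<sigma> x. \<not> sel (k0 + int n) x) \<and> 0 < \<sigma> x" if x: "x \<in> G" for x
  proof -
    from x obtain n where n: "sel (k0 + int n) x" by (auto simp: G_def)
    have s1: "sel (lev x) x" unfolding lev_def \<sigma>_def using n by (rule LeastI)
    have s2: "\<forall>n < \<sigma> x. \<not> sel (k0 + int n) x" unfolding \<sigma>_def using not_less_Least by blast
    have "x \<in> P" using x FP by (auto simp: G_def)
    have "\<sigma> x \<noteq> 0"
    proof
      assume "\<sigma> x = 0"
      hence "sel k0 x" using s1 by (simp add: lev_def)
      thus False using nsel0 \<open>x \<in> P\<close> by blast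
    qed
    thus ?thesis using s1 s2 by simp
  qed
  have xP: "x \<in> P" if "x \<in> G" for x using that FP by (auto simp: G_def)
  have close: "\<bar>c0 - cc (lev x) (idx (lev x) x)\<bar> \<le> KK" if x: "x \<in> G" for x
  proof -
    define k where "k = lev x"
    have kk0: "k0 \<le> k - 1" using sig[OF x] by (simp add: k_def lev_def)
    have ns: "\<not> sel (k - 1) x"
    proof -
      have "\<sigma> x - 1 < \<sigma> x" using sig[OF x] by simp
      hence "\<not> sel (k0 + int (\<sigma> x - 1)) x" using sig[OF x] by blast
      moreover have "k0 + int (\<sigma> x - 1) = k - 1" using sig[OF x] by (simp add: k_def lev_def of_nat_diff)
      ultimately show ?thesis by simp
    qed
    have RpP: "DC (k-1) (idx (k-1) x) \<subseteq> P"
    proof -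
      have "idx k0 x = m0" using xP[OF x] by (simp add: P_def mem_DC)
      thus ?thesis using DC_nest[OF kk0 DC_self[of x] DC_self[of x]] by (simp add: P_def)
    qed
    have RRp: "DC k (idx k x) \<subseteq> DC (k-1) (idx (k-1) x)"
      using DC_nest[of "k-1" k x] DC_self by simp
    have RpQ: "DC (k-1) (idx (k-1) x) \<subseteq> DC 0 (\<lambda>_. 0)" using RpP PQ by (simp add: P_def)
    have c1: "\<bar>c0 - cc (k-1) (idx (k-1) x)\<bar> \<le> lam + mu"
    proof (rule top_close[of "k-1" _ P])
      show "0 \<le> k - 1" using kk0 k0 by simp
      show "H ({x\<in>P. lam < \<bar>u x - c0\<bar>} \<inter> DC (k-1) (idx (k-1) x)) \<le> ennreal (1/2 * Lk (k-1))"
        using ns by (simp add: sel_def selm_def F_def not_less)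
    qed (use RpQ RpP in auto)
    have c2: "\<bar>cc k (idx k x) - cc (k-1) (idx (k-1) x)\<bar> \<le> 2 * mu"
      using parent_close[OF _ RRp RpQ] kk0 k0 by simp
    show ?thesis using c1 c2 by (simp add: KK_def k_def)
  qed
  define S where "S = (\<lambda>x. (lev x, idx (lev x) x)) ` G"
  define Xs where "Xs s = {y\<in>DC (fst s) (snd s). t - KK < \<bar>u y - cc (fst s) (snd s)\<bar>}" for s
  have cov: "{x\<in>P. t < \<bar>u x - c0\<bar>} \<subseteq> A \<union> (\<Union>s\<in>S. Xs s)"
  proof
    fix x assume x: "x \<in> {x\<in>P. t < \<bar>u x - c0\<bar>}"
    hence xF: "x \<in> F" using t by (auto simp: F_def)
    show "x \<in> A \<union> (\<Union>s\<in>S. Xs s)"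
    proof (cases "x \<in> G")
      case False thus ?thesis using xF by (simp add: A_def)
    next
      case True
      have "t - KK < \<bar>u x - cc (lev x) (idx (lev x) x)\<bar>"
        using close[OF True] x by auto
      hence "x \<in> Xs (lev x, idx (lev x) x)" by (simp add: Xs_def DC_self)
      moreover have "(lev x, idx (lev x) x) \<in> S" using True by (simp add: S_def)
      ultimately show ?thesis by blast
    qed
  qed
  have Sprop: "k0 \<le> fst s \<and> selm F (fst s) (snd s) \<and>
        (\<forall>j. k0 \<le> j \<and> j < fst s \<longrightarrow> \<not> selm F j (idx j (crn (fst s) (snd s)))) \<and>
        idx k0 (crn (fst s) (snd s)) = m0" if s: "s \<in> S" for s
  proof -
    from s obtain x where x: "x \<in> G" and sx: "s = (lev x, idx (lev x) x)" by (auto simp: S_def)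
    have l0: "k0 \<le> lev x" by (simp add: lev_def)
    have a1: "selm F (lev x) (idx (lev x) x)" using sig[OF x] by (simp add: sel_def)
    have a2: "\<not> selm F j (idx j (crn (lev x) (idx (lev x) x)))" if j: "k0 \<le> j" "j < lev x" for j
    proof -
      have "idx j (crn (lev x) (idx (lev x) x)) = idx j x" using j by (simp add: idx_crn_mono)
      moreover have "nat (j - k0) < \<sigma> x" using j by (simp add: lev_def)
      hence "\<not> sel (k0 + int (nat (j - k0))) x" using sig[OF x] by blast
      hence "\<not> sel j x" using j by simp
      ultimately show ?thesis by (simp add: sel_def)
    qed
    have a3: "idx k0 (crn (lev x) (idx (lev x) x)) = m0"
      using l0 xP[OF x] by (simp add: idx_crn_mono P_def mem_DC)
    show ?thesis using l0 a1 a2 a3 sx by simp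
  qed
  have Ssum: "(\<Sum>s\<in>S'. ennreal (Lk (fst s))) \<le> 2 * H F" if "finite S'" "S' \<subseteq> S" for S'
  proof -
    have "(\<Sum>s\<in>S'. ennreal (Lk (fst s))) \<le> 2 * H (F \<inter> DC k0 m0)"
      using that Sprop by (intro stop_sum) auto
    also have "F \<inter> DC k0 m0 = F" using FP by (auto simp: P_def)
    finally show ?thesis .
  qed
  have Xb: "H (Xs s) \<le> ennreal \<theta> * ennreal (Lk (fst s))" if s: "s \<in> S" for s
  proof -
    have k: "k0 \<le> fst s" using Sprop[OF s] by simp
    have "crn (fst s) (snd s) \<in> P" using Sprop[OF s] by (simp add: P_def mem_DC)
    hence "DC (fst s) (snd s) \<subseteq> DC k0 m0"
      using DC_nest[OF k _ crn_in] by (simp add: P_def)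
    hence "H (Xs s) \<le> ennreal (\<theta> * Lk (fst s))" unfolding Xs_def using k by (intro hyp) auto
    moreover have "ennreal (\<theta> * Lk (fst s)) = ennreal \<theta> * ennreal (Lk (fst s))"
      using th Lk_pos[of "fst s"] by (intro ennreal_mult) auto
    ultimately show ?thesis by simp
  qed
  have cS: "countable S" by (rule countable_subset[OF subset_UNIV]) simp
  have HU: "H (\<Union>s\<in>S. Xs s) \<le> ennreal \<theta> * (2 * H F)"
    by (rule H_UN_countable[OF cS Xb Ssum])
  have "H {x\<in>P. t < \<bar>u x - c0\<bar>} \<le> H (A \<union> (\<Union>s\<in>S. Xs s))" using cov by (rule H_mono)
  also have "\<dots> \<le> H A + H (\<Union>s\<in>S. Xs s)" by (rule H_Un)
  also have "\<dots> \<le> ennreal \<theta> * (2 * H F)" using HA HU by simp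
  finally have hE: "H {x\<in>P. t < \<bar>u x - c0\<bar>} \<le> ennreal \<theta> * (2 * H F)" .
  have "ennreal lam * H {x\<in>P. t < \<bar>u x - c0\<bar>} \<le> ennreal lam * (ennreal \<theta> * (2 * H F))"
    using hE by (rule mult_left_mono) simp
  also have "\<dots> = ennreal (2*\<theta>) * (ennreal lam * H F)"
    using th ennreal_mult[of 2 \<theta>] by (simp add: ac_simps)
  also have "\<dots> \<le> ennreal (2*\<theta>) * J" using hF by (rule mult_left_mono) simp
  finally show ?thesis by (simp add: P_def)
qed

lemma uniform:
  "\<forall>k m t. 0 \<le> k \<longrightarrow> DC k m \<subseteq> DC 0 (\<lambda>_. 0) \<longrightarrow> (n = 0 \<or> real n * KK \<le> t) \<longrightarrow>
     H {x\<in>DC k m. t < \<bar>u x - cc k m\<bar>} \<le> ennreal ((1/2)^n * Lk k)"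
proof (induction n)
  case 0
  show ?case
  proof (intro allI impI)
    fix k m t
    have "H {x\<in>DC k m. t < \<bar>u x - cc k m\<bar>} \<le> ennreal (Lk k)" by (rule H_cube_le) auto
    thus "H {x\<in>DC k m. t < \<bar>u x - cc k m\<bar>} \<le> ennreal ((1/2)^0 * Lk k)" by simp
  qed
next
  case (Suc n)
  show ?case
  proof (intro allI impI)
    fix k m t assume k: "0 \<le> k" and Q: "DC k m \<subseteq> DC 0 (\<lambda>_. 0)" and tn: "Suc n = 0 \<or> real (Suc n) * KK \<le> t"
    have tK: "real (Suc n) * KK \<le> t" using tn by simp
    have KK0: "0 \<le> KK" using lam_pos lam_KK by simp
    have t: "lam \<le> t"
    proof -
      have "KK \<le> real (Suc n) * KK" using KK0 by (simp add: algebra_simps)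
      thus ?thesis using lam_KK tK by simp
    qed
    have "ennreal lam * H {x\<in>DC k m. t < \<bar>u x - cc k m\<bar>} \<le> ennreal (2 * (1/2)^n) * ennreal (B * Lk k)"
    proof (rule one_step[OF k Q osc[OF k Q] order_refl _ t])
      show "0 \<le> (1/2::real)^n" by simp
      fix k' m' assume k': "k \<le> k'" and sub: "DC k' m' \<subseteq> DC k m"
      have "n = 0 \<or> real n * KK \<le> t - KK" using tK by (cases n) (auto simp: algebra_simps)
      thus "H {x\<in>DC k' m'. t - KK < \<bar>u x - cc k' m'\<bar>} \<le> ennreal ((1/2)^n * Lk k')"
        using Suc.IH k k' sub Q by auto
    qed
    hence "H {x\<in>DC k m. t < \<bar>u x - cc k m\<bar>} \<le> ennreal (1/lam) * (ennreal (2 * (1/2)^n) * ennreal (B * Lk k))"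
      by (rule ennreal_div_le[OF lam_pos])
    also have "\<dots> = ennreal ((1/2)^Suc n * Lk k)"
      using Bpos Lk_pos[of k] by (simp add: ennreal_mult[symmetric] lam_def field_simps)
    finally show "H {x\<in>DC k m. t < \<bar>u x - cc k m\<bar>} \<le> ennreal ((1/2)^Suc n * Lk k)" .
  qed
qed

end

lemma final_arith:
  fixes b t \<kappa> C :: real and n :: nat
  assumes b: "0 < b" and k: "0 < \<kappa>" and C: "1 \<le> C" and n: "t / (\<kappa> * b) - 2 < real n"
  shows "2 * (1/2)^n / (8 * b) \<le> C / b * exp (- (ln 2 / \<kappa>) * t / b)"
proof -
  have e: "exp (- (ln 2 / \<kappa>) * t / b) = 2 powr (- (t / (\<kappa> * b)))"
    using b k by (simp add: powr_def field_simps)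
  have "(1/2::real)^n = 2 powr (- real n)"
    by (simp add: powr_minus powr_realpow power_one_over inverse_eq_divide)
  also have "\<dots> \<le> 2 powr (2 - t / (\<kappa> * b))" using n by (intro powr_mono) auto
  also have "\<dots> = 4 * 2 powr (- (t / (\<kappa> * b)))"
    by (simp add: powr_diff powr_minus divide_inverse)
  finally have h0: "(1/2::real)^n \<le> 4 * 2 powr (- (t / (\<kappa> * b)))" .
  have h: "(1/2::real)^n \<le> 4 * exp (- (ln 2 / \<kappa>) * t / b)" unfolding e by (rule h0)
  have "2 * (1/2)^n / (8 * b) \<le> 2 * (4 * exp (- (ln 2 / \<kappa>) * t / b)) / (8 * b)"
    using h b by (intro divide_right_mono mult_left_mono) auto
  also have "\<dots> = 1 / b * exp (- (ln 2 / \<kappa>) * t / b)" using b by simp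
  also have "\<dots> \<le> C / b * exp (- (ln 2 / \<kappa>) * t / b)"
    using C b by (intro mult_right_mono divide_right_mono) auto
  finally show ?thesis .
qed

lemma floor_arith:
  fixes z :: real
  shows "z - 1 < real (nat \<lfloor>z\<rfloor>)" and "nat \<lfloor>z\<rfloor> = 0 \<or> real (nat \<lfloor>z\<rfloor>) \<le> z"
proof -
  show "z - 1 < real (nat \<lfloor>z\<rfloor>)"
  proof -
    have "real_of_int \<lfloor>z\<rfloor> \<le> real (nat \<lfloor>z\<rfloor>)" by (cases "0 \<le> \<lfloor>z\<rfloor>") auto
    thus ?thesis using floor_correct[of z] by linarith
  qed
  show "nat \<lfloor>z\<rfloor> = 0 \<or> real (nat \<lfloor>z\<rfloor>) \<le> z"
    by (cases "0 \<le> z") auto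
qed

theorem lemma4p2:
  fixes \<beta> :: real and a0 :: "real^'d" and l0 :: real
  assumes "0 < \<beta>" and "\<beta> \<le> real CARD('d)" and "0 < l0"
  shows "\<exists>c C. 0 < c \<and> 0 < C \<and>
    (\<forall>u a l t cQ.
       u \<in> BMO \<beta> a0 l0 \<longrightarrow> 0 < bmo_star \<beta> a0 l0 u \<longrightarrow>
       subcube a0 l0 a l \<longrightarrow>
       ennreal (1 + 2 powr \<beta>) * bmo_star \<beta> a0 l0 u \<le> ennreal t \<longrightarrow>
       (\<forall>c'. ennreal (l powr (-\<beta>)) * choq (hdy \<beta> a l) (cube a l) (\<lambda>x. \<bar>u x - cQ\<bar>)
              \<le> ennreal (l powr (-\<beta>)) * choq (hdy \<beta> a l) (cube a l) (\<lambda>x. \<bar>u x - c'\<bar>)) \<longrightarrow>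
       hdy \<beta> a l {x \<in> cube a l. \<bar>u x - cQ\<bar> > t}
         \<le> ennreal (C / enn2real (bmo_star \<beta> a0 l0 u))
            * choq (hdy \<beta> a l) (cube a l) (\<lambda>x. \<bar>u x - cQ\<bar>)
            * ennreal (exp (- c * t / enn2real (bmo_star \<beta> a0 l0 u))))"
proof -
  define \<kappa> where "\<kappa> = 32 + 24 * 2 powr \<beta>"
  define c where "c = ln 2 / \<kappa>"
  define C where "C = exp (8 * c)"
  have kpos: "0 < \<kappa>" by (simp add: \<kappa>_def add_pos_nonneg)
  have cpos: "0 < c" using kpos by (simp add: c_def)
  have C1: "1 \<le> C" using cpos by (simp add: C_def)
  have "\<forall>u a l t cQ.
       u \<in> BMO \<beta> a0 l0 \<longrightarrow> 0 < bmo_star \<beta> a0 l0 u \<longrightarrow>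
       subcube a0 l0 a l \<longrightarrow>
       ennreal (1 + 2 powr \<beta>) * bmo_star \<beta> a0 l0 u \<le> ennreal t \<longrightarrow>
       (\<forall>c'. ennreal (l powr (-\<beta>)) * choq (hdy \<beta> a l) (cube a l) (\<lambda>x. \<bar>u x - cQ\<bar>)
              \<le> ennreal (l powr (-\<beta>)) * choq (hdy \<beta> a l) (cube a l) (\<lambda>x. \<bar>u x - c'\<bar>)) \<longrightarrow>
       hdy \<beta> a l {x \<in> cube a l. \<bar>u x - cQ\<bar> > t}
         \<le> ennreal (C / enn2real (bmo_star \<beta> a0 l0 u))
            * choq (hdy \<beta> a l) (cube a l) (\<lambda>x. \<bar>u x - cQ\<bar>)
            * ennreal (exp (- c * t / enn2real (bmo_star \<beta> a0 l0 u)))"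
  proof (intro allI impI)
    fix u a l t cQ
    assume bpos0: "0 < bmo_star \<beta> a0 l0 u" and sc: "subcube a0 l0 a l"
      and tb: "ennreal (1 + 2 powr \<beta>) * bmo_star \<beta> a0 l0 u \<le> ennreal t"
      and mini: "\<forall>c'. ennreal (l powr (-\<beta>)) * choq (hdy \<beta> a l) (cube a l) (\<lambda>x. \<bar>u x - cQ\<bar>)
              \<le> ennreal (l powr (-\<beta>)) * choq (hdy \<beta> a l) (cube a l) (\<lambda>x. \<bar>u x - c'\<bar>)"
    have lpos: "0 < l" and subQ0: "cube a l \<subseteq> cube a0 l0" using sc by (auto simp: subcube_def)
    interpret dyad \<beta> a l using assms lpos by unfold_locales auto
    define bm where "bm = bmo_star \<beta> a0 l0 u"
    have bm_fin: "bm \<noteq> top"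
    proof
      assume "bm = top"
      hence "ennreal (1 + 2 powr \<beta>) * bm = top" by (simp add: ennreal_mult_top add_pos_nonneg)
      thus False using tb by (simp add: bm_def top_unique)
    qed
    then obtain b where bdef: "bm = ennreal b" and b0: "0 \<le> b" by (cases bm) auto
    have bpos: "0 < b" using bpos0 bdef by (simp add: bm_def)
    have eb: "enn2real (bmo_star \<beta> a0 l0 u) = b" using bdef b0 by (simp add: bm_def)
    have tb': "(1 + 2 powr \<beta>) * b \<le> t"
    proof -
      have pos: "0 < (1 + 2 powr \<beta>) * b" using bpos by (simp add: add_pos_nonneg)
      have "ennreal ((1 + 2 powr \<beta>) * b) \<le> ennreal t"
        using tb bdef b0 by (simp add: bm_def ennreal_mult)
      thus ?thesis using pos by (cases "0 \<le> t") (auto simp: ennreal_le_iff ennreal_neg)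
    qed
    have pb1: "1 \<le> 2 powr \<beta>" using assms(1) ge_one_powr_ge_zero[of 2 \<beta>] by simp
    have tpos: "0 < t" using tb' bpos pb1 by (smt (verit) mult_pos_pos)
    have b_le_t: "2 * b \<le> t"
    proof -
      have "2 * b \<le> (1 + 2 powr \<beta>) * b" using pb1 bpos by (intro mult_right_mono) auto
      thus ?thesis using tb' by simp
    qed
    define B where "B = 2 * b"
    have Bpos: "0 < B" using bpos by (simp add: B_def)
    have bm_sub: "(INF c. ennreal (snd al powr (-\<beta>)) *
          choq (hdy \<beta> (fst al) (snd al)) (cube (fst al) (snd al)) (\<lambda>x. \<bar>u x - c\<bar>)) \<le> ennreal b"
      if "subcube a0 l0 (fst al) (snd al)" for al
    proof -
      have "(INF c. ennreal (snd al powr (-\<beta>)) *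
          choq (hdy \<beta> (fst al) (snd al)) (cube (fst al) (snd al)) (\<lambda>x. \<bar>u x - c\<bar>)) \<le> bm"
        unfolding bm_def bmo_star_def using that by (intro SUP_upper) (cases al, auto)
      thus ?thesis using bdef by simp
    qed
    define val where "val k m c = ennreal (sd k powr (-\<beta>)) *
        choq (hdy \<beta> (crn k m) (sd k)) (DC k m) (\<lambda>x. \<bar>u x - c\<bar>)" for k m c
    define cc where "cc k m = (SOME c. val k m c < ennreal B)" for k m
    have osc: "choq H (DC k m) (\<lambda>x. \<bar>u x - cc k m\<bar>) \<le> ennreal (B * Lk k)"
      if k: "0 \<le> k" and sub: "DC k m \<subseteq> DC 0 (\<lambda>_. 0)" for k m
    proof -
      have "subcube a0 l0 (crn k m) (sd k)"
        using sub subQ0 sd_pos[of k] Q_DC by (auto simp: subcube_def DC_def)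
      hence "(INF c. val k m c) \<le> ennreal b" using bm_sub[of "(crn k m, sd k)"] by (simp add: val_def DC_def)
      also have "\<dots> < ennreal B" using bpos by (simp add: B_def ennreal_lessI)
      finally have "\<exists>c. val k m c < ennreal B" by (simp add: INF_less_iff)
      hence v: "val k m (cc k m) < ennreal B" unfolding cc_def by (rule someI_ex)
      have "choq H (DC k m) (\<lambda>x. \<bar>u x - cc k m\<bar>) \<le> choq (hdy \<beta> (crn k m) (sd k)) (DC k m) (\<lambda>x. \<bar>u x - cc k m\<bar>)"
        by (intro choq_mono H_loc) auto
      also have "\<dots> = ennreal (sd k powr \<beta>) * val k m (cc k m)"
        using sd_pos[of k] by (simp add: val_def mult.assoc[symmetric] ennreal_mult[symmetric] powr_add[symmetric])
      also have "\<dots> \<le> ennreal (sd k powr \<beta>) * ennreal B" using v by (intro mult_left_mono) auto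
      also have "\<dots> = ennreal (B * Lk k)" using Bpos by (simp add: ennreal_mult[symmetric] Lk_def mult.commute)
      finally show ?thesis .
    qed
    interpret jn \<beta> a l u B cc using Bpos osc by unfold_locales auto
    define I where "I = choq H (cube a l) (\<lambda>x. \<bar>u x - cQ\<bar>)"
    have IB: "I \<le> ennreal (b * Lk 0)"
    proof -
      have "ennreal (l powr (-\<beta>)) * I \<le> (INF c'. ennreal (l powr (-\<beta>)) * choq (hdy \<beta> a l) (cube a l) (\<lambda>x. \<bar>u x - c'\<bar>))"
        using mini by (auto simp: I_def intro: INF_greatest)
      also have "\<dots> \<le> ennreal b" using bm_sub[of "(a, l)"] sc by simp
      finally have h: "ennreal (l powr (-\<beta>)) * I \<le> ennreal b" .
      have "I = ennreal (l powr \<beta>) * (ennreal (l powr (-\<beta>)) * I)"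
        using lpos by (simp add: mult.assoc[symmetric] ennreal_mult[symmetric] powr_add[symmetric])
      also have "\<dots> \<le> ennreal (l powr \<beta>) * ennreal b" using h by (rule mult_left_mono) simp
      also have "\<dots> = ennreal (b * Lk 0)" using b0 by (simp add: ennreal_mult[symmetric] Lk_def sd_def mult.commute)
      finally show ?thesis .
    qed
    have lamb: "lam = 8 * b" unfolding lam_def by (simp add: B_def)
    have KKb: "KK = \<kappa> * b" unfolding KK_def lam_def mu_def by (simp add: B_def \<kappa>_def algebra_simps)
    define E where "E = {x \<in> cube a l. \<bar>u x - cQ\<bar> > t}"
    have goal_form: "ennreal (C / b) * I * ennreal (exp (- c * t / b)) = ennreal (C / b * exp (- c * t / b)) * I"
      using bpos C1 by (simp add: ennreal_mult[symmetric] mult_ac)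
    have main: "H E \<le> ennreal (C / b * exp (- c * t / b)) * I"
    proof (cases "t < lam")
      case True
      have "ennreal t * H E \<le> I" unfolding E_def I_def
        using choq_cheb[of H t "cube a l" "\<lambda>x. \<bar>u x - cQ\<bar>"] H_mono tpos by blast
      hence "H E \<le> ennreal (1/t) * I" by (rule ennreal_div_le[OF tpos])
      also have "\<dots> \<le> ennreal (C / b * exp (- c * t / b)) * I"
      proof (intro mult_right_mono ennreal_leI)
        have "1/t \<le> 1/b" using b_le_t bpos by (intro divide_left_mono) auto
        also have "1/b \<le> C / b * exp (- c * t / b)"
        proof -
          have "c * t / b \<le> 8 * c" using True lamb bpos cpos by (simp add: field_simps)
          hence "1 \<le> C * exp (- c * t / b)" by (simp add: C_def exp_add[symmetric])
          thus ?thesis using bpos by (simp add: field_simps)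
        qed
        finally show "1/t \<le> C / b * exp (- c * t / b)" .
      qed simp
      finally show ?thesis .
    next
      case False
      hence tl: "lam \<le> t" by simp
      define n where "n = nat \<lfloor>(t - KK) / KK\<rfloor>"
      have KKpos: "0 < KK" using KKb kpos bpos by simp
      have n1: "n = 0 \<or> real n * KK \<le> t - KK"
        using floor_arith(2)[of "(t - KK) / KK"] KKpos by (auto simp: n_def field_simps)
      have n2: "t / (\<kappa> * b) - 2 < real n"
      proof -
        have "(t - KK) / KK - 1 < real n" using floor_arith(1) by (simp add: n_def)
        moreover have "(t - KK) / KK = t / (\<kappa> * b) - 1"
          using KKpos unfolding KKb[symmetric] by (simp add: diff_divide_distrib)
        ultimately show ?thesis by simp
      qed
      have "ennreal lam * H E \<le> ennreal (2 * (1/2)^n) * I"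
        unfolding E_def I_def Q_DC
      proof (rule one_step)
        show "choq H (DC 0 (\<lambda>_. 0)) (\<lambda>x. \<bar>u x - cQ\<bar>) \<le> choq H (DC 0 (\<lambda>_. 0)) (\<lambda>x. \<bar>u x - cQ\<bar>)" by simp
        show "choq H (DC 0 (\<lambda>_. 0)) (\<lambda>x. \<bar>u x - cQ\<bar>) \<le> ennreal (B * Lk 0)"
          using IB bpos Lk_pos[of 0] by (simp add: I_def Q_DC B_def order_trans[OF _ ennreal_leI])
        fix k m assume "0 \<le> k" "DC k m \<subseteq> DC 0 (\<lambda>_. 0)"
        thus "H {x\<in>DC k m. t - KK < \<bar>u x - cc k m\<bar>} \<le> ennreal ((1/2)^n * Lk k)"
          using uniform n1 by blast
      qed (use tl in auto)
      hence "H E \<le> ennreal (1/lam) * (ennreal (2 * (1/2)^n) * I)" by (rule ennreal_div_le[OF lam_pos])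
      also have "\<dots> = ennreal (2 * (1/2)^n / (8 * b)) * I"
        using lamb bpos by (simp add: mult.assoc[symmetric] ennreal_mult[symmetric])
      also have "\<dots> \<le> ennreal (C / b * exp (- c * t / b)) * I"
        using final_arith[OF bpos kpos C1 n2] by (intro mult_right_mono ennreal_leI) (auto simp: c_def)
      finally show ?thesis .
    qed
    show "hdy \<beta> a l {x \<in> cube a l. \<bar>u x - cQ\<bar> > t}
         \<le> ennreal (C / enn2real (bmo_star \<beta> a0 l0 u))
            * choq (hdy \<beta> a l) (cube a l) (\<lambda>x. \<bar>u x - cQ\<bar>)
            * ennreal (exp (- c * t / enn2real (bmo_star \<beta> a0 l0 u)))"
      using main goal_form by (simp add: eb E_def I_def)
  qed
  thus ?thesis using cpos C1 by (intro exI[of _ c] exI[of _ C]) auto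
qed


end
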